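(* Let $C\subset\mathbb{E}^{2,1}$ be a crooked plane, and regard $\mathbb{E}^{2,1}$ as a Minkowski patch in the Einstein universe $\operatorname{Ein}^{2,1}$ via the conformal embedding $\mathcal E$ described in the context. Then the closure $\overline{C}$ of $\mathcal E(C)$ in $\operatorname{Ein}^{2,1}$ is a topological submanifold of $\operatorname{Ein}^{2,1}$ homeomorphic to a Klein bottle. Moreover, the preimage (lift) of $\overline{C}$ in the double covering $\widehat{\operatorname{Ein}}^{2,1}$ is the orientation double covering of $\overline{C}$ and is homeomorphic to a torus.
   Context: Let $\mathbb{R}^{3,2}$ be $\mathbb{R}^5$ with the symmetric bilinear form $\langle u,v\rangle=u_1v_1+u_2v_2-u_3v_3-\tfrac12 u_4v_5-\tfrac12 u_5v_4$ (type $(3,2)$). The Einstein universe $\operatorname{Ein}^{2,1}$ is the image in $\mathbb{RP}^4$ of the nullcone $\{v\neq 0:\langle v,v\rangle=0\}$; its double covering $\widehat{\operatorname{Ein}}^{2,1}$ is the quotient of the nonzero null vectors by positive scalars. Minkowski space $\mathbb{E}^{2,1}$ is the affine space with translation space $\mathbb{R}^{2,1}$, i.e. $\mathbb{R}^3$ with $\langle x,y\rangle=x_1y_1+x_2y_2-x_3y_3$; it embeds conformally in $\operatorname{Ein}^{2,1}$ by $\mathcal E(x)=[x:\langle x,x\rangle:1]$ (the complement of the image is the lightcone of the point $[0:0:0:1:0]$). Fix an orientation of $\mathbb{R}^{2,1}$ (via $\det$). For a lightlike geodesic $\ell=p+\mathbb{R}v$ ($v$ null), $\ell^\perp:=p+v^\perp$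 is the null plane containing it; choosing a timelike $u$ with $\langle u,v\rangle<0$, set $\mathcal W^{\pm}(\ell)=\{p+w\in\ell^\perp:\pm\det(u,v,w)>0\}$ (independent of choices). Given a point $p$ and two distinct lightlike geodesics $\ell_1,\ell_2$ through $p$, the stem is $\mathcal S(\ell_1,\ell_2)=\{p+w: w\in\operatorname{span}(\ell_1-p,\ell_2-p),\ \langle w,w\rangle\le 0\}$ (the intersection of the causal future and past of $p$ with the timelike plane through $\ell_1,\ell_2$). A crooked plane with vertex $p$ is either $\mathcal W^+(\ell_1)\cup\mathcal S(\ell_1,\ell_2)\cup\mathcal W^+(\ell_2)$ (positively oriented) or $\mathcal W^-(\ell_1)\cup\mathcal S(\ell_1,\ell_2)\cup\mathcal W^-(\ell_2)$ (negatively oriented), for some such $p,\ell_1,\ell_2$. *)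

theory Defs
  imports "HOL-Analysis.Analysis"
begin

definition quot_topology :: "'a topology \<Rightarrow> ('a \<Rightarrow> 'b) \<Rightarrow> 'b topology" where
  "quot_topology X f = topology (\<lambda>U. U \<subseteq> f ` topspace X \<and> openin X {x \<in> topspace X. f x \<in> U})"

definition covering_map :: "'a topology \<Rightarrow> 'b topology \<Rightarrow> ('a \<Rightarrow> 'b) \<Rightarrow> bool" where
  "covering_map X Y p \<longleftrightarrow>
     continuous_map X Y p \<and> p ` topspace X = topspace Y \<and>
     (\<forall>y \<in> topspace Y. \<exists>T. y \<in> T \<and> openin Y T \<and>
        (\<exists>v. \<Union>v = {x \<in> topspace X. p x \<in> T} \<and>
             (\<forall>u \<in> v. openin X u) \<and> pairwise disjnt v \<and>
             (\<forall>u \<in> v. \<exists>q. homeomorphic_maps (subtopology X u) (subtopology Y T) p q)))"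

definition double_covering_map :: "'a topology \<Rightarrow> 'b topology \<Rightarrow> ('a \<Rightarrow> 'b) \<Rightarrow> bool" where
  "double_covering_map X Y p \<longleftrightarrow> covering_map X Y p \<and>
     (\<forall>y \<in> topspace Y. card {x \<in> topspace X. p x = y} = 2)"

definition torus :: "(complex \<times> complex) topology" where
  "torus = prod_topology (top_of_set (sphere 0 1)) (top_of_set (sphere 0 1))"

text \<open>Klein bottle: R^2 modulo the group generated by (s,t) -> (s+1,t) and (s,t) -> (-s,t+1),
  i.e. the maps (s,t) -> ((-1)^n s + m, t + n), m,n integers.  Points are the orbits.\<close>
definition klein_orbit :: "real \<times> real \<Rightarrow> (real \<times> real) set" where
  "klein_orbit z = {((-1) powi n * fst z + of_int m, snd z + of_int n) | m n :: int. True}"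

definition klein_bottle :: "(real \<times> real) set topology" where
  "klein_bottle = quot_topology (euclidean :: (real \<times> real) topology) klein_orbit"

definition mink :: "real^3 \<Rightarrow> real^3 \<Rightarrow> real" where
  "mink x y = x$1 * y$1 + x$2 * y$2 - x$3 * y$3"

definition det3 :: "real^3 \<Rightarrow> real^3 \<Rightarrow> real^3 \<Rightarrow> real" where
  "det3 u v w = det (vector [u, v, w] :: real^3^3)"

definition lightlike :: "real^3 \<Rightarrow> bool" where
  "lightlike v \<longleftrightarrow> v \<noteq> 0 \<and> mink v v = 0"

definition timelike :: "real^3 \<Rightarrow> bool" where
  "timelike u \<longleftrightarrow> mink u u < 0"

definition geod :: "real^3 \<Rightarrow> real^3 \<Rightarrow> (real^3) set" where
  "geod p v = {p + t *\<^sub>R v | t. True}"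

text \<open>Wings W^+ and W^- of the lightlike geodesic p + R v (for every admissible timelike u;
  the sign is independent of the choice of u).\<close>
definition wing_plus :: "real^3 \<Rightarrow> real^3 \<Rightarrow> (real^3) set" where
  "wing_plus p v = {p + w | w. mink w v = 0 \<and>
      (\<forall>u. timelike u \<and> mink u v < 0 \<longrightarrow> det3 u v w > 0)}"

definition wing_minus :: "real^3 \<Rightarrow> real^3 \<Rightarrow> (real^3) set" where
  "wing_minus p v = {p + w | w. mink w v = 0 \<and>
      (\<forall>u. timelike u \<and> mink u v < 0 \<longrightarrow> det3 u v w < 0)}"

definition stem :: "real^3 \<Rightarrow> real^3 \<Rightarrow> real^3 \<Rightarrow> (real^3) set" where
  "stem p v1 v2 = {p + w | w. w \<in> span {v1, v2} \<and> mink w w \<le> 0}"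

definition crooked_plane :: "(real^3) set \<Rightarrow> bool" where
  "crooked_plane C \<longleftrightarrow> (\<exists>p v1 v2. lightlike v1 \<and> lightlike v2 \<and> geod p v1 \<noteq> geod p v2 \<and>
     (C = wing_plus p v1 \<union> stem p v1 v2 \<union> wing_plus p v2 \<or>
      C = wing_minus p v1 \<union> stem p v1 v2 \<union> wing_minus p v2))"

definition form32 :: "real^5 \<Rightarrow> real^5 \<Rightarrow> real" where
  "form32 u v = u$1 * v$1 + u$2 * v$2 - u$3 * v$3 - 1/2 * u$4 * v$5 - 1/2 * u$5 * v$4"

definition nullcone :: "(real^5) set" where
  "nullcone = {v. v \<noteq> 0 \<and> form32 v v = 0}"

definition ein_pt :: "real^5 \<Rightarrow> (real^5) set" where
  "ein_pt v = {c *\<^sub>R v | c. c \<noteq> 0}"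

definition einhat_pt :: "real^5 \<Rightarrow> (real^5) set" where
  "einhat_pt v = {c *\<^sub>R v | c. c > 0}"

definition Ein :: "(real^5) set topology" where
  "Ein = quot_topology (top_of_set nullcone) ein_pt"

definition EinHat :: "(real^5) set topology" where
  "EinHat = quot_topology (top_of_set nullcone) einhat_pt"

definition ein_cover :: "(real^5) set \<Rightarrow> (real^5) set" where
  "ein_cover S = {c *\<^sub>R v | c v. v \<in> S \<and> c \<noteq> 0}"

definition ein_embed :: "real^3 \<Rightarrow> (real^5) set" where
  "ein_embed x = ein_pt (vector [x$1, x$2, x$3, mink x x, 1])"

end

theory Submission
  imports Defs
begin

lemma istopology_quot:
  "istopology (\<lambda>U. U \<subseteq> f ` topspace X \<and> openin X {x \<in> topspace X. f x \<in> U})"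
proof -
  have 1: "openin X {x \<in> topspace X. f x \<in> S \<inter> T}"
    if "openin X {x \<in> topspace X. f x \<in> S}" "openin X {x \<in> topspace X. f x \<in> T}" for S T
  proof -
    have "{x \<in> topspace X. f x \<in> S \<inter> T} = {x \<in> topspace X. f x \<in> S} \<inter> {x \<in> topspace X. f x \<in> T}" by auto
    then show ?thesis using that by auto
  qed
  have 2: "openin X {x \<in> topspace X. f x \<in> \<Union>K}"
    if "\<forall>S\<in>K. openin X {x \<in> topspace X. f x \<in> S}" for K
  proof -
    have "{x \<in> topspace X. f x \<in> \<Union>K} = (\<Union>S\<in>K. {x \<in> topspace X. f x \<in> S})" by auto
    then show ?thesis using that by auto
  qed
  show ?thesis unfolding istopology_def using 1 2 by blast
qed

lemma openin_quot:
  "openin (quot_topology X f) U \<longleftrightarrow> U \<subseteq> f ` topspace X \<and> openin X {x \<in> topspace X. f x \<in> U}"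
  unfolding quot_topology_def by (simp add: topology_inverse'[OF istopology_quot])

lemma topspace_quot [simp]: "topspace (quot_topology X f) = f ` topspace X"
proof -
  have "openin (quot_topology X f) (f ` topspace X)"
    unfolding openin_quot by (auto intro: openin_subopen[THEN iffD2])
  then have "f ` topspace X \<subseteq> topspace (quot_topology X f)" by (rule openin_subset)
  moreover have "topspace (quot_topology X f) \<subseteq> f ` topspace X"
    using openin_quot[of X f "topspace (quot_topology X f)"] by auto
  ultimately show ?thesis by auto
qed

lemma quotient_map_quot: "quotient_map X (quot_topology X f) f"
  unfolding quotient_map_def openin_quot by auto

lemma continuous_map_quot: "continuous_map X (quot_topology X f) f"
  using quotient_map_quot quotient_imp_continuous_map by blast

lemma closedin_quot:
  "closedin (quot_topology X f) U \<longleftrightarrow> U \<subseteq> f ` topspace X \<and> closedin X {x \<in> topspace X. f x \<in> U}"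
proof (cases "U \<subseteq> f ` topspace X")
  case True
  have "quotient_map X (quot_topology X f) f" by (rule quotient_map_quot)
  then have "closedin X {x \<in> topspace X. f x \<in> U} \<longleftrightarrow> closedin (quot_topology X f) U"
    unfolding quotient_map_closedin using True by simp
  then show ?thesis using True by simp
next
  case False
  then have "\<not> closedin (quot_topology X f) U" using closedin_subset[of "quot_topology X f" U] by auto
  then show ?thesis using False by simp
qed

lemma exhaust_5:
  fixes x :: 5
  shows "x = 1 \<or> x = 2 \<or> x = 3 \<or> x = 4 \<or> x = 5"
proof (induct x)
  case (of_int z)
  then have "z = 0 \<or> z = 1 \<or> z = 2 \<or> z = 3 \<or> z = 4" by fastforce
  then show ?case by auto
qed

lemma forall_5: "(\<forall>i::5. P i) \<longleftrightarrow> P 1 \<and> P 2 \<and> P 3 \<and> P 4 \<and> P 5"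
  by (metis exhaust_5)

lemma vec5_eq_iff: "(x::real^5) = y \<longleftrightarrow> x$1 = y$1 \<and> x$2 = y$2 \<and> x$3 = y$3 \<and> x$4 = y$4 \<and> x$5 = y$5"
  by (simp add: vec_eq_iff forall_5)

lemma vec3_eq_iff: "(x::real^3) = y \<longleftrightarrow> x$1 = y$1 \<and> x$2 = y$2 \<and> x$3 = y$3"
  by (simp add: vec_eq_iff forall_3)

lemma vector_5 [simp]:
 "(vector [a,b,c,d,e] ::('a::zero)^5)$1 = a"
 "(vector [a,b,c,d,e] ::('a::zero)^5)$2 = b"
 "(vector [a,b,c,d,e] ::('a::zero)^5)$3 = c"
 "(vector [a,b,c,d,e] ::('a::zero)^5)$4 = d"
 "(vector [a,b,c,d,e] ::('a::zero)^5)$5 = e"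
  unfolding vector_def by simp_all

lemma norm5: "norm (x::real^5) = sqrt ((x$1)^2 + (x$2)^2 + (x$3)^2 + (x$4)^2 + (x$5)^2)"
proof -
  have U: "UNIV = {1,2,3,4,5::5}" using exhaust_5 by auto
  show ?thesis unfolding norm_vec_def L2_set_def U
    by (simp add: ac_simps)
qed

lemma det3_expand: "det3 u v w =
   u$1 * v$2 * w$3 - u$1 * v$3 * w$2 - u$2 * v$1 * w$3 + u$2 * v$3 * w$1 + u$3 * v$1 * w$2 - u$3 * v$2 * w$1"
  unfolding det3_def det_3 by (simp add: algebra_simps)

lemma mink_sym: "mink x y = mink y x" unfolding mink_def by (simp add: algebra_simps)
lemma mink_add1: "mink (x + y) z = mink x z + mink y z" unfolding mink_def by (simp add: algebra_simps)
lemma mink_add2: "mink z (x + y) = mink z x + mink z y" unfolding mink_def by (simp add: algebra_simps)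
lemma mink_diff1: "mink (x - y) z = mink x z - mink y z" unfolding mink_def by (simp add: algebra_simps)
lemma mink_diff2: "mink z (x - y) = mink z x - mink z y" unfolding mink_def by (simp add: algebra_simps)
lemma mink_scale1: "mink (a *\<^sub>R x) z = a * mink x z" unfolding mink_def by (simp add: algebra_simps)
lemma mink_scale2: "mink z (a *\<^sub>R x) = a * mink z x" unfolding mink_def by (simp add: algebra_simps)
lemma mink_zero [simp]: "mink 0 x = 0" "mink x 0 = 0" unfolding mink_def by simp_all
lemmas mink_lin = mink_add1 mink_add2 mink_diff1 mink_diff2 mink_scale1 mink_scale2

lemma det3_lin:
  "det3 (x + y) v w = det3 x v w + det3 y v w"
  "det3 u (x + y) w = det3 u x w + det3 u y w"
  "det3 u v (x + y) = det3 u v x + det3 u v y"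
  "det3 (a *\<^sub>R x) v w = a * det3 x v w"
  "det3 u (a *\<^sub>R x) w = a * det3 u x w"
  "det3 u v (a *\<^sub>R x) = a * det3 u v x"
  "det3 x x w = 0" "det3 x v x = 0" "det3 u x x = 0"
  unfolding det3_expand by (simp_all add: algebra_simps)

lemma det3_swap12: "det3 v u w = - det3 u v w" unfolding det3_expand by (simp add: algebra_simps)
lemma det3_swap23: "det3 u w v = - det3 u v w" unfolding det3_expand by (simp add: algebra_simps)

lemma continuous_on_sgn_mult:
  fixes f q :: "'a::metric_space \<Rightarrow> real"
  assumes f: "continuous_on S f" and q: "continuous_on S q"
    and z: "\<And>x. x \<in> S \<Longrightarrow> q x = 0 \<Longrightarrow> f x = 0"
  shows "continuous_on S (\<lambda>x. sgn (q x) * f x)"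
  unfolding continuous_on_eq_continuous_within
proof (rule ballI)
  fix x assume x: "x \<in> S"
  have fx: "(f \<longlongrightarrow> f x) (at x within S)" and qx: "(q \<longlongrightarrow> q x) (at x within S)"
    using f q x by (auto simp: continuous_on_eq_continuous_within continuous_within)
  show "continuous (at x within S) (\<lambda>x. sgn (q x) * f x)"
    unfolding continuous_within
  proof (cases "q x = 0")
    case True
    then have "f x = 0" using z x by auto
    then have f0: "(f \<longlongrightarrow> 0) (at x within S)" using fx by simp
    have "((\<lambda>y. sgn (q y) * f y) \<longlongrightarrow> 0) (at x within S)"
    proof (rule Lim_null_comparison[where g="\<lambda>y. norm (f y)"])
      show "\<forall>\<^sub>F y in at x within S. norm (sgn (q y) * f y) \<le> norm (f y)"
        by (auto simp: abs_mult sgn_real_def)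
      show "((\<lambda>y. norm (f y)) \<longlongrightarrow> 0) (at x within S)"
        using tendsto_norm_zero[OF f0] .
    qed
    then show "((\<lambda>y. sgn (q y) * f y) \<longlongrightarrow> sgn (q x) * f x) (at x within S)"
      using True by simp
  next
    case False
    then have "\<forall>\<^sub>F y in at x within S. sgn (q y) = sgn (q x)"
    proof (cases "q x > 0")
      case True
      then have "\<forall>\<^sub>F y in at x within S. q y > 0" using order_tendstoD(1)[OF qx] by auto
      then show ?thesis by eventually_elim (use True in auto)
    next
      case False
      then have "q x < 0" using \<open>q x \<noteq> 0\<close> by auto
      then have "\<forall>\<^sub>F y in at x within S. q y < 0" using order_tendstoD(2)[OF qx] by auto
      then show ?thesis by eventually_elim (use \<open>q x < 0\<close> in auto)
    qed
    then have ev: "\<forall>\<^sub>F y in at x within S. sgn (q x) * f y = sgn (q y) * f y"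
      by eventually_elim auto
    have lim: "((\<lambda>y. sgn (q x) * f y) \<longlongrightarrow> sgn (q x) * f x) (at x within S)"
      by (intro tendsto_intros fx)
    from Lim_transform_eventually[OF lim ev] show "((\<lambda>y. sgn (q y) * f y) \<longlongrightarrow> sgn (q x) * f x) (at x within S)"
      .
  qed
qed

definition clip :: "real \<Rightarrow> real \<Rightarrow> real" where "clip a h = max (- a) (min a h)"
definition X0f :: "real \<Rightarrow> real \<Rightarrow> real \<Rightarrow> real" where
  "X0f c s h = sgn c * (sgn h * sqrt (max 0 (h\<^sup>2 - s\<^sup>2)))"
definition X2f :: "real \<Rightarrow> real \<Rightarrow> real" where "X2f s h = sgn s * clip \<bar>s\<bar> h"
definition modv :: "real \<Rightarrow> real \<Rightarrow> real \<Rightarrow> real \<Rightarrow> real^5" where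
  "modv c s g h = vector [c + g, s + X2f s h, s - X2f s h, X0f c s h, c - g]"

definition Mset :: "(real^5) set" where
  "Mset = {m. m \<noteq> 0 \<and> (m$4)\<^sup>2 = m$1 * m$5 + m$2 * m$3 \<and>
     ((m$3 = 0 \<and> m$1 * m$4 \<ge> 0) \<or> (m$2 = 0 \<and> m$1 * m$4 \<le> 0) \<or> (m$4 = 0 \<and> m$2 * m$3 \<ge> 0))}"

lemma clip_small: "\<bar>h\<bar> \<le> a \<Longrightarrow> clip a h = h" unfolding clip_def by auto
lemma clip_big: "h \<ge> a \<Longrightarrow> 0 \<le> a \<Longrightarrow> clip a h = a" unfolding clip_def by auto
lemma clip_bigneg: "h \<le> - a \<Longrightarrow> 0 \<le> a \<Longrightarrow> clip a h = - a" unfolding clip_def by auto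
lemma clip_odd: "0 \<le> a \<Longrightarrow> clip a (- h) = - clip a h" unfolding clip_def by auto

lemma X2f_sq: "(X2f s h)\<^sup>2 = min (h\<^sup>2) (s\<^sup>2)"
proof -
  have "(clip \<bar>s\<bar> h)\<^sup>2 = min (h\<^sup>2) (s\<^sup>2)"
  proof (cases "\<bar>h\<bar> \<le> \<bar>s\<bar>")
    case True
    then show ?thesis using clip_small[OF True] by (simp add: abs_le_square_iff min_def)
  next
    case False
    then have "h\<^sup>2 > s\<^sup>2" by (simp add: abs_le_square_iff)
    moreover have "clip \<bar>s\<bar> h = \<bar>s\<bar> \<or> clip \<bar>s\<bar> h = - \<bar>s\<bar>"
      using False unfolding clip_def by auto
    ultimately show ?thesis by (auto simp: min_def)
  qed
  then show ?thesis unfolding X2f_def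
    by (cases "s = 0") (auto simp: power_mult_distrib sgn_real_def)
qed

lemma X0f_sq:
  assumes "c\<^sup>2 + s\<^sup>2 = 1" "g\<^sup>2 + h\<^sup>2 = 1"
  shows "(X0f c s h)\<^sup>2 = max 0 (h\<^sup>2 - s\<^sup>2)"
proof (cases "c = 0 \<or> h = 0")
  case True
  then show ?thesis
  proof
    assume "c = 0"
    then have "s\<^sup>2 = 1" using assms by simp
    moreover have "h\<^sup>2 \<le> 1" using assms(2) by (smt (verit) zero_le_power2)
    ultimately show ?thesis unfolding X0f_def by simp
  next
    assume "h = 0" then show ?thesis unfolding X0f_def by simp
  qed
next
  case False
  then show ?thesis unfolding X0f_def
    by (simp add: power_mult_distrib sgn_real_def)
qed

lemma modv_in:
  assumes cs: "c\<^sup>2 + s\<^sup>2 = 1" and gh: "g\<^sup>2 + h\<^sup>2 = 1"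
  shows "modv c s g h \<in> Mset"
proof -
  let ?m = "modv c s g h"
  have nz: "?m \<noteq> 0"
  proof
    assume "?m = 0"
    then have "c + g = 0" "c - g = 0" "s + X2f s h = 0" "s - X2f s h = 0"
      unfolding modv_def by (auto simp: vec5_eq_iff)
    then have "c = 0" "g = 0" "s = 0" by auto
    then show False using cs by simp
  qed
  have null: "(?m$4)\<^sup>2 = ?m$1 * ?m$5 + ?m$2 * ?m$3"
  proof -
    have "?m$1 * ?m$5 + ?m$2 * ?m$3 = c\<^sup>2 - g\<^sup>2 + s\<^sup>2 - (X2f s h)\<^sup>2"
      unfolding modv_def by (simp add: algebra_simps power2_eq_square)
    also have "\<dots> = h\<^sup>2 - min (h\<^sup>2) (s\<^sup>2)" using cs gh X2f_sq by (simp add: algebra_simps)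
    also have "\<dots> = max 0 (h\<^sup>2 - s\<^sup>2)" by (simp add: min_def max_def)
    finally show ?thesis using X0f_sq[OF cs gh] unfolding modv_def by simp
  qed
  have cond: "(?m$3 = 0 \<and> ?m$1 * ?m$4 \<ge> 0) \<or> (?m$2 = 0 \<and> ?m$1 * ?m$4 \<le> 0) \<or> (?m$4 = 0 \<and> ?m$2 * ?m$3 \<ge> 0)"
  proof (cases "h\<^sup>2 \<le> s\<^sup>2")
    case True
    then have "X0f c s h = 0" unfolding X0f_def by simp
    moreover have "(s + X2f s h) * (s - X2f s h) \<ge> 0"
      using X2f_sq[of s h] True by (simp add: algebra_simps power2_eq_square min_def)
    ultimately show ?thesis unfolding modv_def by simp
  next
    case False
    then have hs: "\<bar>h\<bar> > \<bar>s\<bar>" by (metis abs_le_square_iff not_le)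
    have gc: "\<bar>g\<bar> < \<bar>c\<bar>"
    proof -
      have "g\<^sup>2 < c\<^sup>2" using False cs gh by simp
      then show ?thesis by (metis abs_le_square_iff not_le)
    qed
    then have cg: "sgn c * (c + g) \<ge> 0" by (auto simp: sgn_real_def)
    have sq: "sqrt (max 0 (h\<^sup>2 - s\<^sup>2)) \<ge> 0" by simp
    show ?thesis
    proof (cases "h > 0")
      case True
      then have "clip \<bar>s\<bar> h = \<bar>s\<bar>" using hs by (intro clip_big) auto
      then have "X2f s h = s" unfolding X2f_def by (simp add: sgn_mult_abs)
      moreover have "(c + g) * X0f c s h \<ge> 0"
        unfolding X0f_def using True cg sq
        by (metis (no_types, lifting) mult.left_commute mult_nonneg_nonneg mult.commute mult_1 sgn_pos)
      ultimately show ?thesis unfolding modv_def by simp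
    next
      case False
      then have h0: "h < 0" using hs by auto
      then have "clip \<bar>s\<bar> h = - \<bar>s\<bar>" using hs by (intro clip_bigneg) auto
      then have "X2f s h = - s" unfolding X2f_def by (simp add: sgn_mult_abs)
      moreover have "(c + g) * X0f c s h \<le> 0"
      proof -
        have "(c + g) * X0f c s h = - ((sgn c * (c + g)) * sqrt (max 0 (h\<^sup>2 - s\<^sup>2)))"
          unfolding X0f_def using h0 by (simp add: algebra_simps)
        then show ?thesis using cg sq by (simp add: mult_nonneg_nonneg)
      qed
      ultimately show ?thesis unfolding modv_def by simp
    qed
  qed
  show ?thesis unfolding Mset_def using nz null cond by blast
qed

lemma modv_neg: "modv (- c) (- s) (- g) h = - modv c s g h"
  unfolding modv_def X0f_def X2f_def by (simp add: vec5_eq_iff algebra_simps)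

lemma core_inj:
  assumes cs: "c\<^sup>2 + s\<^sup>2 = 1" and hh: "h'\<^sup>2 = h\<^sup>2"
    and x2: "X2f s h' = X2f s h" and x0: "X0f c s h' = X0f c s h"
  shows "h' = h"
proof (rule ccontr)
  assume ne: "h' \<noteq> h"
  then have h': "h' = - h" using hh by (metis power2_eq_iff)
  then have h0: "h \<noteq> 0" using ne by auto
  have "X2f s (- h) = - X2f s h" unfolding X2f_def by (simp add: clip_odd)
  then have a: "sgn s * clip \<bar>s\<bar> h = 0" using x2 h' unfolding X2f_def by simp
  have "X0f c s (- h) = - X0f c s h" unfolding X0f_def by simp
  then have b: "X0f c s h = 0" using x0 h' by simp
  show False
  proof (cases "s = 0")
    case True
    then have "c \<noteq> 0" using cs by auto
    then have "sgn h * sqrt (h\<^sup>2) = 0" using b True unfolding X0f_def by (auto simp: sgn_real_def split: if_splits)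
    then show False using h0 by (auto simp: sgn_real_def split: if_splits)
  next
    case False
    then have "clip \<bar>s\<bar> h = 0" using a by (simp add: sgn_real_def split: if_splits)
    then show False using h0 False unfolding clip_def by (auto simp: max_def min_def split: if_splits)
  qed
qed

lemma modv_inj:
  assumes cs: "c\<^sup>2 + s\<^sup>2 = 1" and gh: "g\<^sup>2 + h\<^sup>2 = 1"
    and cs': "c'\<^sup>2 + s'\<^sup>2 = 1" and gh': "g'\<^sup>2 + h'\<^sup>2 = 1"
    and eq: "modv c' s' g' h' = l *\<^sub>R modv c s g h"
  shows "(l = 1 \<and> c' = c \<and> s' = s \<and> g' = g \<and> h' = h) \<or> (l = -1 \<and> c' = - c \<and> s' = - s \<and> g' = - g \<and> h' = h)"
proof -
  have e1: "c' + g' = l * (c + g)" and e5: "c' - g' = l * (c - g)"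
   and e2: "s' + X2f s' h' = l * (s + X2f s h)" and e3: "s' - X2f s' h' = l * (s - X2f s h)"
   and e4: "X0f c' s' h' = l * X0f c s h"
    using eq unfolding modv_def by (auto simp: vec5_eq_iff)
  have c': "c' = l * c" and g': "g' = l * g" using e1 e5 by (auto simp: algebra_simps)
  have s': "s' = l * s" and x2: "X2f s' h' = l * X2f s h" using e2 e3 by (auto simp: algebra_simps)
  have "c'\<^sup>2 + s'\<^sup>2 = l\<^sup>2 * (c\<^sup>2 + s\<^sup>2)" using c' s' by (simp add: power_mult_distrib algebra_simps)
  then have "l\<^sup>2 = 1" using cs cs' by simp
  then have l: "l = 1 \<or> l = -1" by (simp add: power2_eq_1_iff)
  have hh: "h'\<^sup>2 = h\<^sup>2" using gh gh' g' \<open>l\<^sup>2 = 1\<close> by (simp add: power_mult_distrib)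
  from l show ?thesis
  proof
    assume l1: "l = 1"
    then have "h' = h" using core_inj[OF cs hh] x2 e4 c' s' by simp
    then show ?thesis using l1 c' s' g' by simp
  next
    assume l1: "l = -1"
    have "X2f s h' = X2f s h" using x2 s' l1 unfolding X2f_def by simp
    moreover have "X0f c s h' = X0f c s h" using e4 c' s' l1 unfolding X0f_def by simp
    ultimately have "h' = h" using core_inj[OF cs hh] by simp
    then show ?thesis using l1 c' s' g' by simp
  qed
qed

lemma modv_surj:
  assumes m: "m \<in> Mset"
  shows "\<exists>r>0. \<exists>c s g h. c\<^sup>2 + s\<^sup>2 = 1 \<and> g\<^sup>2 + h\<^sup>2 = 1 \<and> m = r *\<^sub>R modv c s g h"
proof -
  define x0 where "x0 = m$4"
  define x1 where "x1 = (m$1 - m$5) / 2"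
  define x2 where "x2 = (m$2 - m$3) / 2"
  define y1 where "y1 = (m$1 + m$5) / 2"
  define y2 where "y2 = (m$2 + m$3) / 2"
  have mnz: "m \<noteq> 0" and null: "(m$4)\<^sup>2 = m$1 * m$5 + m$2 * m$3"
   and cond: "(m$3 = 0 \<and> m$1 * m$4 \<ge> 0) \<or> (m$2 = 0 \<and> m$1 * m$4 \<le> 0) \<or> (m$4 = 0 \<and> m$2 * m$3 \<ge> 0)"
    using m unfolding Mset_def by auto
  have m1: "m$1 = y1 + x1" and m5: "m$5 = y1 - x1" and m2: "m$2 = y2 + x2" and m3: "m$3 = y2 - x2"
    and m4: "m$4 = x0"
    unfolding x0_def x1_def x2_def y1_def y2_def by (auto simp: field_simps)
  have XY: "x0\<^sup>2 + x1\<^sup>2 + x2\<^sup>2 = y1\<^sup>2 + y2\<^sup>2"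
    using null unfolding m1 m2 m3 m4 m5 by (simp add: algebra_simps power2_eq_square)
  define r where "r = sqrt (y1\<^sup>2 + y2\<^sup>2)"
  have r2: "r\<^sup>2 = y1\<^sup>2 + y2\<^sup>2" unfolding r_def by simp
  have rpos: "r > 0"
  proof -
    have "y1\<^sup>2 + y2\<^sup>2 \<noteq> 0"
    proof
      assume "y1\<^sup>2 + y2\<^sup>2 = 0"
      then have "y1 = 0" "y2 = 0" by (auto simp: add_nonneg_eq_0_iff)
      moreover have "x0 = 0" "x1 = 0" "x2 = 0" using XY \<open>y1\<^sup>2 + y2\<^sup>2 = 0\<close>
        by (auto simp: add_nonneg_eq_0_iff)
      ultimately have "m = 0" using m1 m2 m3 m4 m5 by (simp add: vec5_eq_iff)
      then show False using mnz by simp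
    qed
    then have "y1\<^sup>2 + y2\<^sup>2 > 0" by (metis add_nonneg_nonneg le_less zero_le_power2)
    then show ?thesis unfolding r_def by simp
  qed
  define c where "c = y1 / r"
  define s where "s = y2 / r"
  define g where "g = x1 / r"
  have r2nz: "r\<^sup>2 \<noteq> 0" using rpos by simp
  have ynz: "y1\<^sup>2 + y2\<^sup>2 \<noteq> 0" using r2 r2nz by simp
  have cs: "c\<^sup>2 + s\<^sup>2 = 1" unfolding c_def s_def power_divide add_divide_distrib[symmetric] r2[symmetric]
    using r2nz by simp
  have key: "\<exists>h. g\<^sup>2 + h\<^sup>2 = 1 \<and> r * X2f s h = x2 \<and> r * X0f c s h = x0"
  proof -
    consider (W1) "m$3 = 0" "m$1 * m$4 \<ge> 0" | (W2) "m$2 = 0" "m$1 * m$4 \<le> 0" | (S) "m$4 = 0" "m$2 * m$3 \<ge> 0"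
      using cond by blast
    then show ?thesis
    proof cases
      case S
      have x00: "x0 = 0" using S m4 by simp
      have "y2\<^sup>2 - x2\<^sup>2 \<ge> 0" using S(2) unfolding m2 m3 by (simp add: algebra_simps power2_eq_square)
      then have x2y2: "\<bar>x2\<bar> \<le> \<bar>y2\<bar>" by (simp add: abs_le_square_iff)
      define h where "h = sgn y2 * x2 / r"
      have hs: "\<bar>h\<bar> \<le> \<bar>s\<bar>" unfolding h_def s_def using x2y2 rpos
        by (simp add: abs_mult abs_sgn_eq divide_right_mono split: if_splits)
      have "X2f s h = x2 / r"
      proof (cases "y2 = 0")
        case True then show ?thesis using x2y2 unfolding X2f_def s_def h_def by simp
      next
        case False
        then have "sgn s = sgn y2" unfolding s_def using rpos by (simp add: sgn_divide)
        moreover have "sgn y2 * sgn y2 = 1" using False by (simp add: sgn_real_def)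
        ultimately show ?thesis unfolding X2f_def using clip_small[OF hs] unfolding h_def
          by (simp add: algebra_simps)
      qed
      moreover have "X0f c s h = 0" using hs unfolding X0f_def
        by (simp add: abs_le_square_iff)
      moreover have "g\<^sup>2 + h\<^sup>2 = 1"
      proof -
        have "h\<^sup>2 = x2\<^sup>2 / r\<^sup>2" unfolding h_def
          by (cases "y2 = 0") (use x2y2 in \<open>auto simp: power_divide power_mult_distrib sgn_real_def\<close>)
        then show ?thesis unfolding g_def using XY x00 r2 rpos ynz
          by (simp add: power_divide add_divide_distrib[symmetric])
      qed
      ultimately show ?thesis using rpos x00 by (intro exI[of _ h]) auto
    next
      case W1
      have x2y2: "x2 = y2" using W1 m3 by simp
      have xy: "x0\<^sup>2 + x1\<^sup>2 = y1\<^sup>2" using XY x2y2 by simp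
      define h where "h = sqrt (x0\<^sup>2 + y2\<^sup>2) / r"
      have h0: "h \<ge> 0" unfolding h_def using rpos by simp
      have h2: "h\<^sup>2 = (x0\<^sup>2 + y2\<^sup>2) / r\<^sup>2" unfolding h_def by (simp add: power_divide)
      have hs: "h \<ge> \<bar>s\<bar>"
      proof -
        have "sqrt (y2\<^sup>2) \<le> sqrt (x0\<^sup>2 + y2\<^sup>2)" by simp
        then have "\<bar>y2\<bar> \<le> sqrt (x0\<^sup>2 + y2\<^sup>2)" by simp
        then have "\<bar>y2\<bar> / r \<le> sqrt (x0\<^sup>2 + y2\<^sup>2) / r" using rpos by (simp add: divide_right_mono)
        moreover have "\<bar>s\<bar> = \<bar>y2\<bar> / r" unfolding s_def using rpos by simp
        ultimately show ?thesis unfolding h_def by simp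
      qed
      have "X2f s h = s" unfolding X2f_def using clip_big[OF hs abs_ge_zero] by (simp add: sgn_mult_abs)
      then have e2: "r * X2f s h = x2" unfolding s_def using rpos x2y2 by simp
      have e0: "r * X0f c s h = x0"
      proof (cases "x0 = 0")
        case True
        then have "h\<^sup>2 - s\<^sup>2 = 0" unfolding h2 s_def by (simp add: power_divide)
        then show ?thesis unfolding X0f_def using True by simp
      next
        case False
        then have "x0\<^sup>2 + y2\<^sup>2 > 0" by (simp add: add_pos_nonneg)
        then have hpos: "h > 0" unfolding h_def using rpos by (simp add: divide_pos_pos)
        have "h\<^sup>2 - s\<^sup>2 = x0\<^sup>2 / r\<^sup>2" unfolding h2 s_def power_divide by (simp add: diff_divide_distrib[symmetric])
        then have sq: "sqrt (max 0 (h\<^sup>2 - s\<^sup>2)) = \<bar>x0\<bar> / r" using rpos by (simp add: real_sqrt_divide)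
        have "x0\<^sup>2 > 0" using False by simp
        then have "x1\<^sup>2 < y1\<^sup>2" using xy by linarith
        then have ax: "\<bar>x1\<bar> < \<bar>y1\<bar>" by (metis abs_le_square_iff not_le)
        then have "sgn (y1 + x1) = sgn y1" by (auto simp: sgn_real_def)
        moreover have "(y1 + x1) * x0 \<ge> 0" using W1 m1 m4 by simp
        ultimately have "sgn y1 = sgn x0" using False ax
          by (auto simp: sgn_real_def zero_le_mult_iff split: if_splits)
        moreover have "sgn c = sgn y1" unfolding c_def using rpos by (simp add: sgn_divide)
        ultimately have sc: "sgn c = sgn x0" by simp
        have "r * X0f c s h = r * (sgn x0 * (\<bar>x0\<bar> / r))" unfolding X0f_def sq sc using hpos by simp
        also have "\<dots> = sgn x0 * \<bar>x0\<bar>" using rpos by simp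
        also have "\<dots> = x0" by (simp add: sgn_mult_abs)
        finally show ?thesis .
      qed
      have "g\<^sup>2 + h\<^sup>2 = (x1\<^sup>2 + (x0\<^sup>2 + y2\<^sup>2)) / r\<^sup>2" unfolding g_def h2 power_divide
        by (simp add: add_divide_distrib)
      also have "\<dots> = 1" using xy r2 r2nz by (simp add: algebra_simps)
      finally have "g\<^sup>2 + h\<^sup>2 = 1" .
      then show ?thesis using e2 e0 by blast
    next
      case W2
      have x2y2: "x2 = - y2" using W2 m2 by simp
      have xy: "x0\<^sup>2 + x1\<^sup>2 = y1\<^sup>2" using XY x2y2 by simp
      define h where "h = - sqrt (x0\<^sup>2 + y2\<^sup>2) / r"
      have h2: "h\<^sup>2 = (x0\<^sup>2 + y2\<^sup>2) / r\<^sup>2" unfolding h_def by (simp add: power_divide)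
      have hs: "h \<le> - \<bar>s\<bar>"
      proof -
        have "sqrt (y2\<^sup>2) \<le> sqrt (x0\<^sup>2 + y2\<^sup>2)" by simp
        then have "\<bar>y2\<bar> \<le> sqrt (x0\<^sup>2 + y2\<^sup>2)" by simp
        then have "\<bar>y2\<bar> / r \<le> sqrt (x0\<^sup>2 + y2\<^sup>2) / r" using rpos by (simp add: divide_right_mono)
        moreover have "\<bar>s\<bar> = \<bar>y2\<bar> / r" unfolding s_def using rpos by simp
        ultimately show ?thesis unfolding h_def by simp
      qed
      have "X2f s h = - s" unfolding X2f_def using clip_bigneg[OF hs abs_ge_zero] by (simp add: sgn_mult_abs)
      then have e2: "r * X2f s h = x2" unfolding s_def using rpos x2y2 by simp
      have e0: "r * X0f c s h = x0"
      proof (cases "x0 = 0")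
        case True
        then have "h\<^sup>2 - s\<^sup>2 = 0" unfolding h2 s_def by (simp add: power_divide)
        then show ?thesis unfolding X0f_def using True by simp
      next
        case False
        then have "x0\<^sup>2 + y2\<^sup>2 > 0" by (simp add: add_pos_nonneg)
        then have hneg: "h < 0" unfolding h_def using rpos by (simp add: divide_pos_pos)
        have "h\<^sup>2 - s\<^sup>2 = x0\<^sup>2 / r\<^sup>2" unfolding h2 s_def power_divide by (simp add: diff_divide_distrib[symmetric])
        then have sq: "sqrt (max 0 (h\<^sup>2 - s\<^sup>2)) = \<bar>x0\<bar> / r" using rpos by (simp add: real_sqrt_divide)
        have "x0\<^sup>2 > 0" using False by simp
        then have "x1\<^sup>2 < y1\<^sup>2" using xy by linarith
        then have ax: "\<bar>x1\<bar> < \<bar>y1\<bar>" by (metis abs_le_square_iff not_le)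
        then have "sgn (y1 + x1) = sgn y1" by (auto simp: sgn_real_def)
        moreover have "(y1 + x1) * x0 \<le> 0" using W2 m1 m4 by simp
        ultimately have "sgn y1 = - sgn x0" using False ax
          by (auto simp: sgn_real_def mult_le_0_iff split: if_splits)
        moreover have "sgn c = sgn y1" unfolding c_def using rpos by (simp add: sgn_divide)
        ultimately have sc: "sgn c = - sgn x0" by simp
        have "r * X0f c s h = r * (sgn x0 * (\<bar>x0\<bar> / r))" unfolding X0f_def sq sc using hneg by simp
        also have "\<dots> = sgn x0 * \<bar>x0\<bar>" using rpos by simp
        also have "\<dots> = x0" by (simp add: sgn_mult_abs)
        finally show ?thesis .
      qed
      have "g\<^sup>2 + h\<^sup>2 = (x1\<^sup>2 + (x0\<^sup>2 + y2\<^sup>2)) / r\<^sup>2" unfolding g_def h2 power_divide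
        by (simp add: add_divide_distrib)
      also have "\<dots> = 1" using xy r2 r2nz by (simp add: algebra_simps)
      finally have "g\<^sup>2 + h\<^sup>2 = 1" .
      then show ?thesis using e2 e0 by blast
    qed
  qed
  then obtain h where gh: "g\<^sup>2 + h\<^sup>2 = 1" and e2: "r * X2f s h = x2" and e0: "r * X0f c s h = x0"
    by blast
  have "m = r *\<^sub>R modv c s g h"
    unfolding vec5_eq_iff modv_def using e2 e0 rpos
    by (simp add: m1 m2 m3 m4 m5 c_def s_def g_def algebra_simps)
  then show ?thesis using rpos cs gh by blast
qed

lemma quot_induced:
  assumes q: "quotient_map X Y f" and G: "continuous_map X Z G"
    and inv: "\<And>x y. x \<in> topspace X \<Longrightarrow> y \<in> topspace X \<Longrightarrow> f x = f y \<Longrightarrow> G x = G y"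
  shows "continuous_map Y Z (\<lambda>S. G (SOME x. x \<in> topspace X \<and> f x = S))"
    and "\<And>x. x \<in> topspace X \<Longrightarrow> G (SOME y. y \<in> topspace X \<and> f y = f x) = G x"
proof -
  show eq: "G (SOME y. y \<in> topspace X \<and> f y = f x) = G x" if "x \<in> topspace X" for x
  proof -
    have "\<exists>y. y \<in> topspace X \<and> f y = f x" using that by blast
    then have "(SOME y. y \<in> topspace X \<and> f y = f x) \<in> topspace X \<and> f (SOME y. y \<in> topspace X \<and> f y = f x) = f x"
      by (rule someI_ex)
    then show ?thesis using inv that by blast
  qed
  have "continuous_map X Z ((\<lambda>S. G (SOME x. x \<in> topspace X \<and> f x = S)) \<circ> f)"
    using G by (rule continuous_map_eq) (simp add: eq)
  then show "continuous_map Y Z (\<lambda>S. G (SOME x. x \<in> topspace X \<and> f x = S))"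
    using continuous_compose_quotient_map[OF q] by blast
qed

lemma some_inv:
  assumes "w \<in> A" and "\<And>x y. x \<in> A \<Longrightarrow> y \<in> A \<Longrightarrow> f x = f y \<Longrightarrow> G x = G y"
  shows "G (SOME x. x \<in> A \<and> f x = f w) = G w"
proof -
  have "\<exists>x. x \<in> A \<and> f x = f w" using assms(1) by blast
  then have "(SOME x. x \<in> A \<and> f x = f w) \<in> A \<and> f (SOME x. x \<in> A \<and> f x = f w) = f w"
    by (rule someI_ex)
  then show ?thesis using assms by blast
qed

lemma test_ts1: "(z::real\<times>real) \<in> topspace euclidean" by simp
lemma test_ts2: "(w::real^5) \<in> nullcone \<Longrightarrow> w \<in> topspace (top_of_set nullcone)" by simp

lemma form32_scale: "form32 (a *\<^sub>R u) (a *\<^sub>R u) = a\<^sup>2 * form32 u u"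
  unfolding form32_def by (simp add: algebra_simps power2_eq_square)

lemma nullcone_scale: "w \<in> nullcone \<Longrightarrow> a \<noteq> 0 \<Longrightarrow> a *\<^sub>R w \<in> nullcone"
  unfolding nullcone_def by (simp add: form32_scale)

lemma ein_pt_scale: "a \<noteq> 0 \<Longrightarrow> ein_pt (a *\<^sub>R w) = ein_pt w"
  unfolding ein_pt_def
proof (intro equalityI subsetI)
  fix x assume a: "a \<noteq> 0"
  { assume "x \<in> {c *\<^sub>R a *\<^sub>R w |c. c \<noteq> 0}"
    then obtain c where "c \<noteq> 0" "x = c *\<^sub>R a *\<^sub>R w" by auto
    then show "x \<in> {c *\<^sub>R w |c. c \<noteq> 0}" using a by (intro CollectI exI[of _ "c * a"]) auto }
  { assume "x \<in> {c *\<^sub>R w |c. c \<noteq> 0}"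
    then obtain c where "c \<noteq> 0" "x = c *\<^sub>R w" by auto
    then show "x \<in> {c *\<^sub>R a *\<^sub>R w |c. c \<noteq> 0}" using a by (intro CollectI exI[of _ "c / a"]) auto }
qed

lemma einhat_pt_scale: "a > 0 \<Longrightarrow> einhat_pt (a *\<^sub>R w) = einhat_pt w"
  unfolding einhat_pt_def
proof (intro equalityI subsetI)
  fix x assume a: "a > 0"
  { assume "x \<in> {c *\<^sub>R a *\<^sub>R w |c. c > 0}"
    then obtain c where "c > 0" "x = c *\<^sub>R a *\<^sub>R w" by auto
    then show "x \<in> {c *\<^sub>R w |c. c > 0}" using a by (intro CollectI exI[of _ "c * a"]) auto }
  { assume "x \<in> {c *\<^sub>R w |c. c > 0}"
    then obtain c where "c > 0" "x = c *\<^sub>R w" by auto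
    then show "x \<in> {c *\<^sub>R a *\<^sub>R w |c. c > 0}" using a by (intro CollectI exI[of _ "c / a"]) auto }
qed

lemma ein_pt_self: "w \<in> ein_pt w" unfolding ein_pt_def by (auto intro: exI[of _ 1])
lemma einhat_pt_self: "w \<in> einhat_pt w" unfolding einhat_pt_def by (auto intro: exI[of _ 1])

lemma ein_pt_eq: "ein_pt w = ein_pt w' \<Longrightarrow> \<exists>a. a \<noteq> 0 \<and> w' = a *\<^sub>R w"
  using ein_pt_self[of w'] unfolding ein_pt_def by auto

lemma einhat_pt_eq: "einhat_pt w = einhat_pt w' \<Longrightarrow> \<exists>a. a > 0 \<and> w' = a *\<^sub>R w"
  using einhat_pt_self[of w'] unfolding einhat_pt_def by auto

lemma ein_pt_eq_iff: "ein_pt w = ein_pt w' \<longleftrightarrow> (\<exists>a. a \<noteq> 0 \<and> w' = a *\<^sub>R w)"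
  using ein_pt_eq ein_pt_scale by metis

lemma einhat_pt_eq_iff: "einhat_pt w = einhat_pt w' \<longleftrightarrow> (\<exists>a. a > 0 \<and> w' = a *\<^sub>R w)"
  using einhat_pt_eq einhat_pt_scale by metis

lemma ein_cover_hat: "ein_cover (einhat_pt w) = ein_pt w"
  unfolding ein_cover_def
proof (intro equalityI subsetI)
  fix x
  { assume "x \<in> {c *\<^sub>R v |c v. v \<in> einhat_pt w \<and> c \<noteq> 0}"
    then obtain c v where "v \<in> einhat_pt w" "c \<noteq> 0" "x = c *\<^sub>R v" by auto
    then obtain d where "d > 0" "v = d *\<^sub>R w" unfolding einhat_pt_def by auto
    then show "x \<in> ein_pt w" unfolding ein_pt_def using \<open>c \<noteq> 0\<close> \<open>x = c *\<^sub>R v\<close>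
      by (intro CollectI exI[of _ "c * d"]) auto }
  { assume "x \<in> ein_pt w"
    then show "x \<in> {c *\<^sub>R v |c v. v \<in> einhat_pt w \<and> c \<noteq> 0}"
      unfolding ein_pt_def using einhat_pt_self[of w] by auto }
qed

lemma ein_pt_neg: "ein_pt (- w) = ein_pt w"
  using ein_pt_scale[of "-1" w] by simp

lemma topspace_Ein: "topspace Ein = ein_pt ` nullcone"
  unfolding Ein_def by simp
lemma topspace_EinHat: "topspace EinHat = einhat_pt ` nullcone"
  unfolding EinHat_def by simp

lemma quotient_Ein: "quotient_map (top_of_set nullcone) Ein ein_pt"
  unfolding Ein_def by (rule quotient_map_quot)
lemma quotient_EinHat: "quotient_map (top_of_set nullcone) EinHat einhat_pt"
  unfolding EinHat_def by (rule quotient_map_quot)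

lemma nullcone_nz: "w \<in> nullcone \<Longrightarrow> w \<noteq> 0" unfolding nullcone_def by auto

lemma continuous_ein_cover: "continuous_map EinHat Ein ein_cover"
proof (rule continuous_compose_quotient_map[OF quotient_EinHat])
  show "continuous_map (top_of_set nullcone) Ein (ein_cover \<circ> einhat_pt)"
    using quotient_imp_continuous_map[OF quotient_Ein]
    by (rule continuous_map_eq) (simp add: ein_cover_hat)
qed

definition Gproj :: "real^5 \<Rightarrow> real^5^5" where
  "Gproj w = (\<chi> i j. w$i * w$j / (norm w)\<^sup>2)"

lemma cancel_sq: "a \<noteq> 0 \<Longrightarrow> (a * x) * (a * y) / (a\<^sup>2 * N) = x * y / (N::real)"
proof -
  assume a: "a \<noteq> 0"
  have "(a * x) * (a * y) = a\<^sup>2 * (x * y)" by (simp add: power2_eq_square)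
  then show ?thesis using a by (simp add: power2_eq_square)
qed

lemma Gproj_scale: "a \<noteq> 0 \<Longrightarrow> Gproj (a *\<^sub>R w) = Gproj w"
  unfolding Gproj_def by (simp add: vec_eq_iff power_mult_distrib cancel_sq)

lemma Gproj_inj:
  assumes w: "w \<noteq> 0" and w': "w' \<noteq> 0" and eq: "Gproj w = Gproj w'"
  shows "\<exists>a. a \<noteq> 0 \<and> w' = a *\<^sub>R w"
proof -
  obtain i where i: "w$i \<noteq> 0" using w by (metis vec_eq_iff zero_index)
  define N where "N = (norm w)\<^sup>2"
  define N' where "N' = (norm w')\<^sup>2"
  have N: "N > 0" "N' > 0" unfolding N_def N'_def using w w' by auto
  have e: "w$i * w$j / N = w'$i * w'$j / N'" for j
    using eq unfolding Gproj_def N_def N'_def vec_eq_iff by auto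
  have "w'$i * w'$i / N' \<noteq> 0" using e[of i] i N by auto
  then have i': "w'$i \<noteq> 0" by auto
  define a where "a = w$i * N' / (N * w'$i)"
  have "a \<noteq> 0" unfolding a_def using i i' N by auto
  moreover have "w' = a *\<^sub>R w"
  proof (subst vec_eq_iff, intro allI)
    fix j
    have "w'$j = (w'$i * w'$j / N') * N' / w'$i" using i' N by auto
    also have "\<dots> = (w$i * w$j / N) * N' / w'$i" using e[of j] by simp
    also have "\<dots> = a * w$j" unfolding a_def using N i' by (simp add: field_simps)
    finally show "w'$j = (a *\<^sub>R w)$j" by simp
  qed
  ultimately show ?thesis by blast
qed

lemma continuous_Gproj: "continuous_on nullcone Gproj"
  unfolding Gproj_def
  by (intro continuous_on_vec_lambda continuous_intros) (auto dest: nullcone_nz)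

lemma Hausdorff_Ein: "Hausdorff_space Ein"
proof -
  let ?g = "\<lambda>S. Gproj (SOME x. x \<in> topspace (top_of_set nullcone) \<and> ein_pt x = S)"
  have inv: "\<And>x y. x \<in> topspace (top_of_set nullcone) \<Longrightarrow> y \<in> topspace (top_of_set nullcone) \<Longrightarrow>
      ein_pt x = ein_pt y \<Longrightarrow> Gproj x = Gproj y"
    using ein_pt_eq Gproj_scale by (metis)
  have cG: "continuous_map (top_of_set nullcone) euclidean Gproj"
    using continuous_Gproj by (simp add: continuous_map_iff_continuous)
  note q = quot_induced[OF quotient_Ein cG inv]
  have "inj_on ?g (topspace Ein)"
  proof (rule inj_onI)
    fix S S' assume "S \<in> topspace Ein" "S' \<in> topspace Ein" and eq: "?g S = ?g S'"
    then obtain w w' where w: "w \<in> nullcone" "S = ein_pt w" and w': "w' \<in> nullcone" "S' = ein_pt w'"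
      unfolding topspace_Ein by auto
    have t1: "w \<in> topspace (top_of_set nullcone)" "w' \<in> topspace (top_of_set nullcone)" using w(1) w'(1) by auto
    have g1: "?g S = Gproj w" unfolding w(2) using t1(1) inv by (rule some_inv)
    have g2: "?g S' = Gproj w'" unfolding w'(2) using t1(2) inv by (rule some_inv)
    have "Gproj w = Gproj w'" using eq g1 g2 by simp
    then obtain a where "a \<noteq> 0" "w' = a *\<^sub>R w" using Gproj_inj nullcone_nz w w' by metis
    then show "S = S'" using w w' ein_pt_scale by simp
  qed
  then show ?thesis using Hausdorff_space_injective_preimage[OF Hausdorff_space_euclidean q(1)] by blast
qed

definition Gray :: "real^5 \<Rightarrow> real^5" where "Gray w = w /\<^sub>R norm w"

lemma Hausdorff_EinHat: "Hausdorff_space EinHat"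
proof -
  let ?g = "\<lambda>S. Gray (SOME x. x \<in> topspace (top_of_set nullcone) \<and> einhat_pt x = S)"
  have inv: "\<And>x y. x \<in> topspace (top_of_set nullcone) \<Longrightarrow> y \<in> topspace (top_of_set nullcone) \<Longrightarrow>
      einhat_pt x = einhat_pt y \<Longrightarrow> Gray x = Gray y"
  proof -
    fix x y assume "einhat_pt x = einhat_pt y"
    then obtain a where "a > 0" "y = a *\<^sub>R x" using einhat_pt_eq by blast
    then show "Gray x = Gray y" unfolding Gray_def by simp
  qed
  have cG: "continuous_map (top_of_set nullcone) euclidean Gray"
    unfolding continuous_map_iff_continuous Gray_def
    by (intro continuous_intros) (auto dest: nullcone_nz)
  note q = quot_induced[OF quotient_EinHat cG inv]
  have "inj_on ?g (topspace EinHat)"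
  proof (rule inj_onI)
    fix S S' assume "S \<in> topspace EinHat" "S' \<in> topspace EinHat" and eq: "?g S = ?g S'"
    then obtain w w' where w: "w \<in> nullcone" "S = einhat_pt w" and w': "w' \<in> nullcone" "S' = einhat_pt w'"
      unfolding topspace_EinHat by auto
    have t1: "w \<in> topspace (top_of_set nullcone)" "w' \<in> topspace (top_of_set nullcone)" using w(1) w'(1) by auto
    have g1: "?g S = Gray w" unfolding w(2) using t1(1) inv by (rule some_inv)
    have g2: "?g S' = Gray w'" unfolding w'(2) using t1(2) inv by (rule some_inv)
    have G: "Gray w = Gray w'" using eq g1 g2 by simp
    have nz: "norm w \<noteq> 0" "norm w' \<noteq> 0" using nullcone_nz w w' by auto
    have "w' = norm w' *\<^sub>R (w' /\<^sub>R norm w')" using nz by simp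
    also have "\<dots> = norm w' *\<^sub>R (w /\<^sub>R norm w)" using G unfolding Gray_def by simp
    also have "\<dots> = (norm w' / norm w) *\<^sub>R w" by (simp add: divide_inverse_commute)
    finally have "w' = (norm w' / norm w) *\<^sub>R w" .
    moreover have "norm w' / norm w > 0" using nullcone_nz w w' by simp
    ultimately show "S = S'" using w w' einhat_pt_scale by metis
  qed
  then show ?thesis using Hausdorff_space_injective_preimage[OF Hausdorff_space_euclidean q(1)] by blast
qed

definition pi3 :: "real^5 \<Rightarrow> real^3" where "pi3 u = vector [u$1, u$2, u$3]"
definition Evec :: "real^3 \<Rightarrow> real^5" where "Evec x = vector [x$1, x$2, x$3, mink x x, 1]"

lemma form32_pi3: "form32 u u = mink (pi3 u) (pi3 u) - u$4 * u$5"
  unfolding form32_def mink_def pi3_def by simp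

lemma ein_embed_Evec: "ein_embed x = ein_pt (Evec x)"
  unfolding ein_embed_def Evec_def by simp

lemma Mset_scale: "m \<in> Mset \<Longrightarrow> a \<noteq> 0 \<Longrightarrow> a *\<^sub>R m \<in> Mset"
proof -
  assume m: "m \<in> Mset" and a: "a \<noteq> 0"
  have nz: "m \<noteq> 0" and null: "(m$4)\<^sup>2 = m$1 * m$5 + m$2 * m$3"
   and cond: "(m$3 = 0 \<and> m$1 * m$4 \<ge> 0) \<or> (m$2 = 0 \<and> m$1 * m$4 \<le> 0) \<or> (m$4 = 0 \<and> m$2 * m$3 \<ge> 0)"
    using m unfolding Mset_def by auto
  have a2: "a\<^sup>2 > 0" using a by simp
  have "((a *\<^sub>R m)$4)\<^sup>2 = a\<^sup>2 * (m$4)\<^sup>2" by (simp add: power_mult_distrib)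
  also have "\<dots> = (a *\<^sub>R m)$1 * (a *\<^sub>R m)$5 + (a *\<^sub>R m)$2 * (a *\<^sub>R m)$3"
    using null by (simp add: algebra_simps power2_eq_square)
  finally have null': "((a *\<^sub>R m)$4)\<^sup>2 = (a *\<^sub>R m)$1 * (a *\<^sub>R m)$5 + (a *\<^sub>R m)$2 * (a *\<^sub>R m)$3" .
  have p14: "(a *\<^sub>R m)$1 * (a *\<^sub>R m)$4 = a\<^sup>2 * (m$1 * m$4)" by (simp add: algebra_simps power2_eq_square)
  have p23: "(a *\<^sub>R m)$2 * (a *\<^sub>R m)$3 = a\<^sup>2 * (m$2 * m$3)" by (simp add: algebra_simps power2_eq_square)
  have cond': "((a *\<^sub>R m)$3 = 0 \<and> (a *\<^sub>R m)$1 * (a *\<^sub>R m)$4 \<ge> 0) \<or> ((a *\<^sub>R m)$2 = 0 \<and> (a *\<^sub>R m)$1 * (a *\<^sub>R m)$4 \<le> 0)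
      \<or> ((a *\<^sub>R m)$4 = 0 \<and> (a *\<^sub>R m)$2 * (a *\<^sub>R m)$3 \<ge> 0)"
    unfolding p14 p23 using cond a a2 by (auto simp: mult_nonneg_nonneg mult_nonneg_nonpos)
  have "a *\<^sub>R m \<noteq> 0" using a nz by simp
  then show ?thesis unfolding Mset_def using null' cond' by blast
qed

locale cpl =
  fixes p f1 f2 n :: "real^3"
  assumes f11: "mink f1 f1 = 0" and f22: "mink f2 f2 = 0" and f12: "mink f1 f2 = -1/2"
    and nf1: "mink n f1 = 0" and nf2: "mink n f2 = 0" and nn: "mink n n = 1"
begin

lemma f21: "mink f2 f1 = -1/2" using f12 mink_sym by metis
lemma f1n: "mink f1 n = 0" using nf1 mink_sym by metis
lemma f2n: "mink f2 n = 0" using nf2 mink_sym by metis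
lemmas rels = f11 f22 f12 f21 nf1 nf2 f1n f2n nn

definition "P0 = (vector [p$1, p$2, p$3, mink p p, 1] :: real^5)"
definition "F1 = (vector [f1$1, f1$2, f1$3, 2 * mink p f1, 0] :: real^5)"
definition "F2 = (vector [f2$1, f2$2, f2$3, 2 * mink p f2, 0] :: real^5)"
definition "Nn = (vector [n$1, n$2, n$3, 2 * mink p n, 0] :: real^5)"
definition "E4 = (vector [0, 0, 0, 1, 0] :: real^5)"

definition T :: "real^5 \<Rightarrow> real^5" where
  "T m = m$1 *\<^sub>R P0 + m$2 *\<^sub>R F1 + m$3 *\<^sub>R F2 + m$4 *\<^sub>R Nn + m$5 *\<^sub>R E4"

lemma T_comp:
  "pi3 (T m) = m$1 *\<^sub>R p + m$2 *\<^sub>R f1 + m$3 *\<^sub>R f2 + m$4 *\<^sub>R n"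
  "(T m)$4 = m$1 * mink p p + 2 * m$2 * mink p f1 + 2 * m$3 * mink p f2 + 2 * m$4 * mink p n + m$5"
  "(T m)$5 = m$1"
  unfolding T_def P0_def F1_def F2_def Nn_def E4_def pi3_def by (simp_all add: vec3_eq_iff)

lemma T_comp123: "(T m)$1 = (pi3 (T m))$1" "(T m)$2 = (pi3 (T m))$2" "(T m)$3 = (pi3 (T m))$3"
  unfolding pi3_def by simp_all

lemma mink_expand:
  "mink (a *\<^sub>R p + b *\<^sub>R f1 + c *\<^sub>R f2 + d *\<^sub>R n) (a *\<^sub>R p + b *\<^sub>R f1 + c *\<^sub>R f2 + d *\<^sub>R n)
   = a\<^sup>2 * mink p p + 2 * a * b * mink p f1 + 2 * a * c * mink p f2 + 2 * a * d * mink p n - b * c + d\<^sup>2"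
proof -
  have s1: "mink f1 p = mink p f1" "mink f2 p = mink p f2" "mink n p = mink p n" using mink_sym by metis+
  show ?thesis by (simp add: mink_lin rels s1 algebra_simps power2_eq_square)
qed

lemma form_T: "form32 (T m) (T m) = (m$4)\<^sup>2 - m$1 * m$5 - m$2 * m$3"
  unfolding form32_pi3 T_comp mink_expand by (simp add: algebra_simps power2_eq_square)

lemma linear_T: "linear T"
  by (rule linearI) (simp_all add: T_def algebra_simps scaleR_add_left)

lemma T_zero: assumes "T m = 0" shows "m = 0"
proof -
  have m1: "m$1 = 0" using T_comp(3)[of m] assms by simp
  have y: "m$2 *\<^sub>R f1 + m$3 *\<^sub>R f2 + m$4 *\<^sub>R n = 0"
    using T_comp(1)[of m] assms m1 by (simp add: pi3_def vec3_eq_iff)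
  have "mink (m$2 *\<^sub>R f1 + m$3 *\<^sub>R f2 + m$4 *\<^sub>R n) f2 = - m$2 / 2"
    by (simp add: mink_lin rels)
  then have m2: "m$2 = 0" using y by simp
  have "mink (m$2 *\<^sub>R f1 + m$3 *\<^sub>R f2 + m$4 *\<^sub>R n) f1 = - m$3 / 2"
    by (simp add: mink_lin rels)
  then have m3: "m$3 = 0" using y by simp
  have "mink (m$2 *\<^sub>R f1 + m$3 *\<^sub>R f2 + m$4 *\<^sub>R n) n = m$4"
    by (simp add: mink_lin rels)
  then have m4: "m$4 = 0" using y by simp
  have m5: "m$5 = 0" using T_comp(2)[of m] assms m1 m2 m3 m4 by simp
  show ?thesis using m1 m2 m3 m4 m5 by (simp add: vec5_eq_iff)
qed

lemma inj_T: "inj T"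
  using linear_T T_zero by (simp add: linear_injective_0)

definition Ti :: "real^5 \<Rightarrow> real^5" where
  "Ti = (SOME g. linear g \<and> (\<forall>x. g (T x) = x) \<and> (\<forall>x. T (g x) = x))"

lemma Ti: "linear Ti" "Ti (T x) = x" "T (Ti w) = w"
proof -
  have "\<exists>g. linear g \<and> (\<forall>x. g (T x) = x) \<and> (\<forall>x. T (g x) = x)"
    using linear_injective_isomorphism[OF linear_T inj_T] by auto
  then have "linear Ti \<and> (\<forall>x. Ti (T x) = x) \<and> (\<forall>x. T (Ti x) = x)"
    unfolding Ti_def by (rule someI_ex)
  then show "linear Ti" "Ti (T x) = x" "T (Ti w) = w" by auto
qed

lemma T_scale: "T (a *\<^sub>R m) = a *\<^sub>R T m"
  using linear_T by (simp add: linear_scale)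

lemma continuous_T: "continuous_on S T"
  using linear_T by (simp add: linear_continuous_on linear_linear)

lemma continuous_Ti: "continuous_on S Ti"
  using Ti(1) by (simp add: linear_continuous_on linear_linear)

lemma nullcone_T: "T m \<in> nullcone \<longleftrightarrow> m \<noteq> 0 \<and> (m$4)\<^sup>2 = m$1 * m$5 + m$2 * m$3"
proof -
  have "T m \<noteq> 0 \<longleftrightarrow> m \<noteq> 0" using T_zero linear_T by (metis linear_0)
  then show ?thesis unfolding nullcone_def using form_T[of m] by (auto simp: algebra_simps)
qed

lemma T_Mset_null: "m \<in> Mset \<Longrightarrow> T m \<in> nullcone"
  unfolding nullcone_T Mset_def by auto

definition D3 :: "real^3 \<Rightarrow> real^3" where "D3 v = v$1 *\<^sub>R f1 + v$2 *\<^sub>R f2 + v$3 *\<^sub>R n"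

lemma linear_D3: "linear D3"
  by (rule linearI) (simp_all add: D3_def algebra_simps scaleR_add_left)

lemma D3_pair: "mink (D3 v) f2 = - v$1 / 2" "mink (D3 v) f1 = - v$2 / 2" "mink (D3 v) n = v$3"
  unfolding D3_def by (simp_all add: mink_lin rels)

lemma inj_D3: "inj D3"
proof -
  have "v = 0" if "D3 v = 0" for v
    using D3_pair[of v] that by (simp add: vec3_eq_iff)
  then show ?thesis using linear_D3 by (simp add: linear_injective_0)
qed

lemma decomp: "y = (-2 * mink y f2) *\<^sub>R f1 + (-2 * mink y f1) *\<^sub>R f2 + (mink y n) *\<^sub>R n"
proof -
  have "surj D3" using linear_injective_imp_surjective[OF linear_D3 inj_D3] by simp
  then obtain v where v: "y = D3 v" by (metis surjD)
  show ?thesis unfolding v using D3_pair[of v] by (simp add: D3_def)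
qed

lemma coef_unique:
  assumes "a *\<^sub>R f1 + b *\<^sub>R f2 + c *\<^sub>R n = a' *\<^sub>R f1 + b' *\<^sub>R f2 + c' *\<^sub>R n"
  shows "a = a' \<and> b = b' \<and> c = c'"
proof -
  have "D3 (vector [a,b,c]) = D3 (vector [a',b',c'])" using assms by (simp add: D3_def)
  then have "vector [a,b,c] = (vector [a',b',c'] :: real^3)" using inj_T inj_D3 by (simp add: inj_eq)
  then show ?thesis by (simp add: vec3_eq_iff)
qed

definition Cset :: "(real^3) set" where
  "Cset = {p + a *\<^sub>R f1 + c *\<^sub>R n | a c. c > 0} \<union> {p + a *\<^sub>R f1 + b *\<^sub>R f2 | a b. a * b \<ge> 0}
        \<union> {p + b *\<^sub>R f2 + c *\<^sub>R n | b c. c < 0}"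

lemma Evec_T: "Evec (p + a *\<^sub>R f1 + b *\<^sub>R f2 + c *\<^sub>R n) = T (vector [1, a, b, c, c\<^sup>2 - a * b])"
proof -
  let ?m = "vector [1, a, b, c, c\<^sup>2 - a * b] :: real^5"
  have P: "pi3 (T ?m) = p + a *\<^sub>R f1 + b *\<^sub>R f2 + c *\<^sub>R n" unfolding T_comp by simp
  have "mink (p + a *\<^sub>R f1 + b *\<^sub>R f2 + c *\<^sub>R n) (p + a *\<^sub>R f1 + b *\<^sub>R f2 + c *\<^sub>R n) = (T ?m)$4"
    using mink_expand[of 1 a b c] unfolding T_comp by simp
  then show ?thesis unfolding Evec_def vec5_eq_iff using T_comp123[of ?m] T_comp(3)[of ?m]
    by (simp add: P)
qed

lemma Cset_iff:
  "p + a *\<^sub>R f1 + b *\<^sub>R f2 + c *\<^sub>R n \<in> Cset \<longleftrightarrow> (vector [1, a, b, c, c\<^sup>2 - a * b] :: real^5) \<in> Mset"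
proof -
  let ?x = "p + a *\<^sub>R f1 + b *\<^sub>R f2 + c *\<^sub>R n"
  have "?x \<in> Cset \<longleftrightarrow> (b = 0 \<and> c > 0) \<or> (c = 0 \<and> a * b \<ge> 0) \<or> (a = 0 \<and> c < 0)"
  proof
    assume "?x \<in> Cset"
    then consider (A) a' c' where "?x = p + a' *\<^sub>R f1 + c' *\<^sub>R n" "c' > 0"
      | (B) a' b' where "?x = p + a' *\<^sub>R f1 + b' *\<^sub>R f2" "a' * b' \<ge> 0"
      | (C) b' c' where "?x = p + b' *\<^sub>R f2 + c' *\<^sub>R n" "c' < 0"
      unfolding Cset_def by blast
    then show "(b = 0 \<and> c > 0) \<or> (c = 0 \<and> a * b \<ge> 0) \<or> (a = 0 \<and> c < 0)"
    proof cases
      case A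
      then have "a *\<^sub>R f1 + b *\<^sub>R f2 + c *\<^sub>R n = a' *\<^sub>R f1 + 0 *\<^sub>R f2 + c' *\<^sub>R n" by (simp add: algebra_simps)
      then show ?thesis using coef_unique A by blast
    next
      case B
      then have "a *\<^sub>R f1 + b *\<^sub>R f2 + c *\<^sub>R n = a' *\<^sub>R f1 + b' *\<^sub>R f2 + 0 *\<^sub>R n" by (simp add: algebra_simps)
      then show ?thesis using coef_unique B by blast
    next
      case C
      then have "a *\<^sub>R f1 + b *\<^sub>R f2 + c *\<^sub>R n = 0 *\<^sub>R f1 + b' *\<^sub>R f2 + c' *\<^sub>R n" by (simp add: algebra_simps)
      then show ?thesis using coef_unique C by blast
    qed
  next
    assume "(b = 0 \<and> c > 0) \<or> (c = 0 \<and> a * b \<ge> 0) \<or> (a = 0 \<and> c < 0)"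
    then show "?x \<in> Cset" unfolding Cset_def by (auto simp: algebra_simps) (blast+)
  qed
  also have "\<dots> \<longleftrightarrow> (vector [1, a, b, c, c\<^sup>2 - a * b] :: real^5) \<in> Mset"
    unfolding Mset_def by (auto simp: vec5_eq_iff zero_le_mult_iff mult_le_0_iff)
  finally show ?thesis .
qed

end

context cpl begin

definition "Eset = Mset \<inter> {m. m$1 \<noteq> 0}"
definition "Cb = ein_pt ` T ` Mset"

lemma embed_image: "ein_embed ` Cset = ein_pt ` T ` Eset"
proof (intro equalityI subsetI)
  fix S assume "S \<in> ein_embed ` Cset"
  then obtain x where x: "x \<in> Cset" "S = ein_embed x" by auto
  define a where "a = -2 * mink (x - p) f2"
  define b where "b = -2 * mink (x - p) f1"
  define c where "c = mink (x - p) n"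
  have xe: "x = p + a *\<^sub>R f1 + b *\<^sub>R f2 + c *\<^sub>R n"
    using decomp[of "x - p"] unfolding a_def b_def c_def by (simp add: algebra_simps)
  let ?m = "vector [1, a, b, c, c\<^sup>2 - a * b] :: real^5"
  have "?m \<in> Eset" using x(1) Cset_iff[of a b c] xe unfolding Eset_def by simp
  moreover have "S = ein_pt (T ?m)" using x(2) xe ein_embed_Evec Evec_T by simp
  ultimately show "S \<in> ein_pt ` T ` Eset" by blast
next
  fix S assume "S \<in> ein_pt ` T ` Eset"
  then obtain m where m: "m \<in> Mset" "m$1 \<noteq> 0" "S = ein_pt (T m)" unfolding Eset_def by auto
  define m' where "m' = (1 / m$1) *\<^sub>R m"
  have m'M: "m' \<in> Mset" unfolding m'_def using Mset_scale m by simp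
  have m'1: "m'$1 = 1" unfolding m'_def using m by simp
  have "(m'$4)\<^sup>2 = m'$1 * m'$5 + m'$2 * m'$3" using m'M unfolding Mset_def by simp
  then have m'5: "m'$5 = (m'$4)\<^sup>2 - m'$2 * m'$3" using m'1 by simp
  have m'v: "m' = vector [1, m'$2, m'$3, m'$4, (m'$4)\<^sup>2 - m'$2 * m'$3]"
    using m'1 m'5 by (simp add: vec5_eq_iff)
  define x where "x = p + m'$2 *\<^sub>R f1 + m'$3 *\<^sub>R f2 + m'$4 *\<^sub>R n"
  have "x \<in> Cset" unfolding x_def Cset_iff using m'M m'v by simp
  moreover have "ein_embed x = ein_pt (T m')"
    unfolding x_def ein_embed_Evec Evec_T using m'v by simp
  moreover have "ein_pt (T m') = S" unfolding m'_def T_scale using m ein_pt_scale by simp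
  ultimately show "S \<in> ein_embed ` Cset" by blast
qed

lemma TM_sat: "w \<in> nullcone \<Longrightarrow> ein_pt w \<in> Cb \<longleftrightarrow> w \<in> T ` Mset"
proof
  assume "w \<in> nullcone" "ein_pt w \<in> Cb"
  then obtain m where m: "m \<in> Mset" "ein_pt w = ein_pt (T m)" unfolding Cb_def by auto
  then obtain a where "a \<noteq> 0" "w = a *\<^sub>R T m" using ein_pt_eq by metis
  then have "w = T (a *\<^sub>R m)" "a *\<^sub>R m \<in> Mset" using T_scale Mset_scale m by auto
  then show "w \<in> T ` Mset" by blast
qed (auto simp: Cb_def)

lemma TM_sat_hat: "w \<in> nullcone \<Longrightarrow> einhat_pt w \<in> einhat_pt ` T ` Mset \<longleftrightarrow> w \<in> T ` Mset"
proof
  assume "w \<in> nullcone" "einhat_pt w \<in> einhat_pt ` T ` Mset"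
  then obtain m where m: "m \<in> Mset" "einhat_pt w = einhat_pt (T m)" by auto
  then obtain a where "a > 0" "w = a *\<^sub>R T m" using einhat_pt_eq by metis
  then have "w = T (a *\<^sub>R m)" "a *\<^sub>R m \<in> Mset" using T_scale Mset_scale m by auto
  then show "w \<in> T ` Mset" by blast
qed auto

definition Kset :: "(real^5) set" where
  "Kset = {m. (m$3 = 0 \<and> m$1 * m$4 \<ge> 0) \<or> (m$2 = 0 \<and> m$1 * m$4 \<le> 0) \<or> (m$4 = 0 \<and> m$2 * m$3 \<ge> 0)}"

lemma closed_Kset: "closed Kset"
proof -
  have "Kset = ({m. m$3 = 0} \<inter> {m. 0 \<le> m$1 * m$4}) \<union> ({m. m$2 = 0} \<inter> {m. m$1 * m$4 \<le> 0})
     \<union> ({m. m$4 = 0} \<inter> {m. 0 \<le> m$2 * m$3})" unfolding Kset_def by auto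
  moreover have "closed \<dots>"
    by (intro closed_Un closed_Int closed_Collect_eq closed_Collect_le continuous_intros)
  ultimately show ?thesis by simp
qed

lemma TM_eq: "T ` Mset = nullcone \<inter> Ti -` Kset"
proof (intro equalityI subsetI)
  fix w assume "w \<in> T ` Mset"
  then obtain m where "m \<in> Mset" "w = T m" by auto
  then show "w \<in> nullcone \<inter> Ti -` Kset" using T_Mset_null Ti(2) unfolding Mset_def Kset_def by auto
next
  fix w assume w: "w \<in> nullcone \<inter> Ti -` Kset"
  then have "T (Ti w) \<in> nullcone" using Ti(3) by simp
  then have "Ti w \<in> Mset" using w unfolding nullcone_T Mset_def Kset_def by auto
  then show "w \<in> T ` Mset" using Ti(3)[of w] by force
qed

lemma closedin_TM: "closedin (top_of_set nullcone) (T ` Mset)"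
  unfolding TM_eq using continuous_closedin_preimage[OF continuous_Ti closed_Kset] by simp

lemma Cb_sub: "Cb \<subseteq> topspace Ein"
  unfolding Cb_def topspace_Ein using T_Mset_null by auto

lemma closedin_Cb: "closedin Ein Cb"
proof -
  have "{w \<in> topspace (top_of_set nullcone). ein_pt w \<in> Cb} = T ` Mset"
    using TM_sat T_Mset_null by auto
  then show ?thesis unfolding Ein_def closedin_quot using Cb_sub closedin_TM
    by (simp add: Ein_def)
qed

lemma approx:
  assumes m: "m \<in> Mset"
    and d: "\<And>r. 0 < r \<Longrightarrow> r < 1 \<Longrightarrow> m + r *\<^sub>R d1 + r\<^sup>2 *\<^sub>R d2 \<in> Eset"
  shows "ein_pt (T m) \<in> Ein closure_of (ein_pt ` T ` Eset)"
  unfolding in_closure_of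
proof (intro conjI allI impI)
  show "ein_pt (T m) \<in> topspace Ein" using Cb_sub m unfolding Cb_def by auto
  fix U assume U: "ein_pt (T m) \<in> U \<and> openin Ein U"
  then have "openin (top_of_set nullcone) {w \<in> nullcone. ein_pt w \<in> U}"
    unfolding Ein_def openin_quot by simp
  then obtain Ov where O: "open Ov" "{w \<in> nullcone. ein_pt w \<in> U} = nullcone \<inter> Ov"
    unfolding openin_open by auto
  have TmO: "T m \<in> Ov" using O U T_Mset_null m by auto
  let ?f = "\<lambda>r. T (m + r *\<^sub>R d1 + r\<^sup>2 *\<^sub>R d2)"
  have "((\<lambda>r. m + r *\<^sub>R d1 + r\<^sup>2 *\<^sub>R d2) \<longlongrightarrow> m + 0 *\<^sub>R d1 + 0\<^sup>2 *\<^sub>R d2) (at_right (0::real))"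
    by (intro tendsto_intros)
  then have "((\<lambda>r. m + r *\<^sub>R d1 + r\<^sup>2 *\<^sub>R d2) \<longlongrightarrow> m) (at_right (0::real))" by simp
  note lim = this
  have blT: "bounded_linear T" using linear_T by (simp add: linear_conv_bounded_linear)
  have "(?f \<longlongrightarrow> T m) (at_right (0::real))"
    using blT lim by (rule bounded_linear.tendsto)
  then have ev1: "\<forall>\<^sub>F r in at_right 0. ?f r \<in> Ov" using O(1) TmO by (rule topological_tendstoD)
  have ev2: "\<forall>\<^sub>F r in at_right (0::real). 0 < r \<and> r < 1"
    by (simp add: eventually_at_right_field) (auto intro: exI[of _ 1])
  have "\<forall>\<^sub>F r in at_right (0::real). ?f r \<in> Ov \<and> 0 < r \<and> r < 1" using ev1 ev2 by eventually_elim auto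
  then obtain r where r: "?f r \<in> Ov" "0 < r" "r < 1"
    using eventually_happens'[OF trivial_limit_at_right_real] by blast
  have E: "m + r *\<^sub>R d1 + r\<^sup>2 *\<^sub>R d2 \<in> Eset" using d r by auto
  then have "?f r \<in> nullcone" using T_Mset_null unfolding Eset_def by auto
  then have "ein_pt (?f r) \<in> U" using O(2) r(1) by auto
  then show "\<exists>y. y \<in> ein_pt ` T ` Eset \<and> y \<in> U" using E by blast
qed

lemma boundary_approx:
  assumes m: "m \<in> Mset" and m1: "m$1 = 0"
  shows "ein_pt (T m) \<in> Ein closure_of (ein_pt ` T ` Eset)"
proof -
  have null: "(m$4)\<^sup>2 = m$2 * m$3" and cond: "(m$3 = 0) \<or> (m$2 = 0) \<or> (m$4 = 0 \<and> m$2 * m$3 \<ge> 0)"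
    using m m1 unfolding Mset_def by auto
  have m4: "m$4 = 0" using null cond by auto
  have m23: "m$2 * m$3 = 0" using null m4 by simp
  let ?v = "\<lambda>a b c d e. vector [a, b, c, d, e] :: real^5"
  have inE: "x \<in> Eset" if "x$1 \<noteq> 0" "x$4 = 0" "x$1 * x$5 + x$2 * x$3 = 0" "x$2 * x$3 \<ge> 0" for x
  proof -
    have "x \<noteq> 0" using that by auto
    then show ?thesis using that unfolding Eset_def Mset_def by auto
  qed
  consider (a) "m$5 = 0" | (b) "m$5 \<noteq> 0" "m$2 \<noteq> 0" | (c) "m$5 \<noteq> 0" "m$3 \<noteq> 0" | (d) "m$5 \<noteq> 0" "m$2 = 0" "m$3 = 0"
    by blast
  then show ?thesis
  proof cases
    case a
    show ?thesis
      by (rule approx[OF m, of "?v 1 0 0 0 0" 0]) (rule inE, use a m1 m4 m23 in auto)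
  next
    case b
    then have m3: "m$3 = 0" using m23 by simp
    show ?thesis
      by (rule approx[OF m, of "?v (- m$5) 0 ((m$5)\<^sup>2 / m$2) 0 0" 0])
        (rule inE, use b m1 m3 m4 in \<open>auto simp: field_simps power2_eq_square\<close>)
  next
    case c
    then have m2: "m$2 = 0" using m23 by simp
    show ?thesis
      by (rule approx[OF m, of "?v (- m$5) ((m$5)\<^sup>2 / m$3) 0 0 0" 0])
        (rule inE, use c m1 m2 m4 in \<open>auto simp: field_simps power2_eq_square\<close>)
  next
    case d
    show ?thesis
      by (rule approx[OF m, of "?v 0 \<bar>m$5\<bar> \<bar>m$5\<bar> 0 0" "?v (- m$5) 0 0 0 0"])
        (rule inE, use d m1 m4 in \<open>auto simp: field_simps power2_eq_square\<close>)
  qed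
qed

lemma closure_eq: "Ein closure_of (ein_embed ` Cset) = Cb"
proof (intro equalityI)
  show "Ein closure_of (ein_embed ` Cset) \<subseteq> Cb"
    unfolding embed_image
    by (rule closure_of_minimal[OF _ closedin_Cb]) (auto simp: Cb_def Eset_def)
next
  show "Cb \<subseteq> Ein closure_of (ein_embed ` Cset)"
    unfolding embed_image
  proof
    fix S assume "S \<in> Cb"
    then obtain m where m: "m \<in> Mset" "S = ein_pt (T m)" unfolding Cb_def by auto
    show "S \<in> Ein closure_of (ein_pt ` T ` Eset)"
    proof (cases "m$1 = 0")
      case True then show ?thesis using boundary_approx m by simp
    next
      case False
      then have "S \<in> ein_pt ` T ` Eset" using m unfolding Eset_def by auto
      moreover have "ein_pt ` T ` Eset \<subseteq> topspace Ein" using Cb_sub unfolding Cb_def Eset_def by auto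
      then have "ein_pt ` T ` Eset \<subseteq> Ein closure_of (ein_pt ` T ` Eset)" by (rule closure_of_subset)
      ultimately show ?thesis by (rule subsetD[rotated])
    qed
  qed
qed

lemma L_eq: "{S \<in> topspace EinHat. ein_cover S \<in> Cb} = einhat_pt ` T ` Mset"
proof (intro equalityI subsetI)
  fix S assume "S \<in> {S \<in> topspace EinHat. ein_cover S \<in> Cb}"
  then obtain w where w: "w \<in> nullcone" "S = einhat_pt w" "ein_pt w \<in> Cb"
    unfolding topspace_EinHat by (auto simp: ein_cover_hat)
  then show "S \<in> einhat_pt ` T ` Mset" using TM_sat by auto
next
  fix S assume "S \<in> einhat_pt ` T ` Mset"
  then obtain m where "m \<in> Mset" "S = einhat_pt (T m)" by auto
  then show "S \<in> {S \<in> topspace EinHat. ein_cover S \<in> Cb}"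
    unfolding topspace_EinHat Cb_def using T_Mset_null by (auto simp: ein_cover_hat)
qed

end

lemma modv_alt: "modv c s g h =
   (c + g) *\<^sub>R vector [1,0,0,0,0] + (s + X2f s h) *\<^sub>R vector [0,1,0,0,0] + (s - X2f s h) *\<^sub>R vector [0,0,1,0,0]
   + X0f c s h *\<^sub>R vector [0,0,0,1,0] + (c - g) *\<^sub>R vector [0,0,0,0,1]"
  unfolding modv_def by (simp add: vec5_eq_iff)

lemma continuous_modv:
  fixes c s g h :: "'a::metric_space \<Rightarrow> real"
  assumes cc: "continuous_on D c" and cs: "continuous_on D s" and cg: "continuous_on D g" and ch: "continuous_on D h"
    and u1: "\<And>x. x \<in> D \<Longrightarrow> (c x)\<^sup>2 + (s x)\<^sup>2 = 1" and u2: "\<And>x. x \<in> D \<Longrightarrow> (g x)\<^sup>2 + (h x)\<^sup>2 = 1"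
  shows "continuous_on D (\<lambda>x. modv (c x) (s x) (g x) (h x))"
proof -
  have x2: "continuous_on D (\<lambda>x. X2f (s x) (h x))"
    unfolding X2f_def clip_def
    by (rule continuous_on_sgn_mult) (auto intro!: continuous_intros cs ch)
  have in1: "continuous_on D (\<lambda>x. sgn (h x) * sqrt (max 0 ((h x)\<^sup>2 - (s x)\<^sup>2)))"
    by (rule continuous_on_sgn_mult) (auto intro!: continuous_intros cs ch)
  have x0: "continuous_on D (\<lambda>x. X0f (c x) (s x) (h x))"
    unfolding X0f_def
  proof (rule continuous_on_sgn_mult[OF in1 cc])
    fix x assume x: "x \<in> D" "c x = 0"
    then have "(s x)\<^sup>2 = 1" using u1[OF x(1)] by simp
    moreover have "(h x)\<^sup>2 \<le> 1" using u2[OF x(1)] by (smt (verit) zero_le_power2)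
    ultimately show "sgn (h x) * sqrt (max 0 ((h x)\<^sup>2 - (s x)\<^sup>2)) = 0" by simp
  qed
  show ?thesis unfolding modv_alt
    by (intro continuous_intros x2 x0 cc cs cg ch)
qed

lemma unit_complex: "z \<in> sphere (0::complex) 1 \<Longrightarrow> (Re z)\<^sup>2 + (Im z)\<^sup>2 = 1"
  using cmod_power2[of z] by simp

lemma compact_torus: "compact_space torus"
  unfolding torus_def prod_topology_subtopology_eu
  by (intro compact_space_subtopology) (simp add: compact_Times)

context cpl begin

definition Q :: "real \<Rightarrow> real \<Rightarrow> real \<Rightarrow> real \<Rightarrow> real^5" where
  "Q c s g h = T (modv c s g h)"

definition tmap :: "complex \<times> complex \<Rightarrow> (real^5) set" where
  "tmap z = einhat_pt (Q (Re (fst z)) (Im (fst z)) (Re (snd z)) (Im (snd z)))"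

definition "Lset = einhat_pt ` T ` Mset"

lemma Q_null: "c\<^sup>2 + s\<^sup>2 = 1 \<Longrightarrow> g\<^sup>2 + h\<^sup>2 = 1 \<Longrightarrow> Q c s g h \<in> nullcone"
  unfolding Q_def using modv_in T_Mset_null by blast

lemma Q_eq_scale:
  assumes "Q c' s' g' h' = a *\<^sub>R Q c s g h"
  shows "modv c' s' g' h' = a *\<^sub>R modv c s g h"
  using assms inj_T unfolding Q_def T_scale[symmetric] by (simp add: inj_eq)

lemma continuous_tmap: "continuous_map torus (subtopology EinHat Lset) tmap"
proof -
  let ?D = "sphere (0::complex) 1 \<times> sphere (0::complex) 1"
  have cQ: "continuous_on ?D (\<lambda>z. Q (Re (fst z)) (Im (fst z)) (Re (snd z)) (Im (snd z)))"
    unfolding Q_def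
    by (rule continuous_on_compose2[OF continuous_T[of UNIV] continuous_modv])
       (auto intro!: continuous_intros simp: unit_complex mem_Times_iff)
  have sub: "\<forall>z\<in>?D. Q (Re (fst z)) (Im (fst z)) (Re (snd z)) (Im (snd z)) \<in> nullcone"
    using Q_null unit_complex by auto
  have "continuous_map (top_of_set ?D) (top_of_set nullcone) (\<lambda>z. Q (Re (fst z)) (Im (fst z)) (Re (snd z)) (Im (snd z)))"
    using cQ sub by (simp add: continuous_map_in_subtopology continuous_map_iff_continuous Pi_iff)
  then have "continuous_map (top_of_set ?D) EinHat (einhat_pt \<circ> (\<lambda>z. Q (Re (fst z)) (Im (fst z)) (Re (snd z)) (Im (snd z))))"
    by (rule continuous_map_compose[OF _ quotient_imp_continuous_map[OF quotient_EinHat]])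
  moreover have "einhat_pt \<circ> (\<lambda>z. Q (Re (fst z)) (Im (fst z)) (Re (snd z)) (Im (snd z))) = tmap"
    by (rule ext) (simp add: tmap_def)
  ultimately have "continuous_map (top_of_set ?D) EinHat tmap" by simp
  moreover have "tmap ` ?D \<subseteq> Lset"
    unfolding tmap_def Lset_def Q_def using modv_in unit_complex by auto
  ultimately show ?thesis unfolding torus_def prod_topology_subtopology_eu
    by (auto simp: continuous_map_in_subtopology image_subset_iff)
qed

lemma tmap_inj: "inj_on tmap (topspace torus)"
proof (rule inj_onI)
  fix z z' assume z: "z \<in> topspace torus" and z': "z' \<in> topspace torus" and eq: "tmap z = tmap z'"
  have u: "(Re (fst z))\<^sup>2 + (Im (fst z))\<^sup>2 = 1" "(Re (snd z))\<^sup>2 + (Im (snd z))\<^sup>2 = 1"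
    "(Re (fst z'))\<^sup>2 + (Im (fst z'))\<^sup>2 = 1" "(Re (snd z'))\<^sup>2 + (Im (snd z'))\<^sup>2 = 1"
    using z z' unit_complex unfolding torus_def prod_topology_subtopology_eu by (auto simp: mem_Times_iff)
  obtain a where a: "a > 0" and aeq: "Q (Re (fst z')) (Im (fst z')) (Re (snd z')) (Im (snd z')) =
      a *\<^sub>R Q (Re (fst z)) (Im (fst z)) (Re (snd z)) (Im (snd z))"
    using eq einhat_pt_eq unfolding tmap_def by blast
  have "modv (Re (fst z')) (Im (fst z')) (Re (snd z')) (Im (snd z')) =
      a *\<^sub>R modv (Re (fst z)) (Im (fst z)) (Re (snd z)) (Im (snd z))" using aeq by (rule Q_eq_scale)
  from modv_inj[OF u(1,2) u(3,4) this] a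
  have "Re (fst z') = Re (fst z)" "Im (fst z') = Im (fst z)" "Re (snd z') = Re (snd z)" "Im (snd z') = Im (snd z)"
    by auto
  then show "z = z'" by (simp add: prod_eq_iff complex_eq_iff)
qed

lemma tmap_surj: "tmap ` topspace torus = topspace (subtopology EinHat Lset)"
proof -
  have LE: "Lset \<subseteq> topspace EinHat" unfolding Lset_def topspace_EinHat using T_Mset_null by auto
  have "tmap ` topspace torus \<subseteq> Lset"
    unfolding tmap_def Lset_def Q_def torus_def prod_topology_subtopology_eu
    using modv_in unit_complex by (auto simp: mem_Times_iff)
  moreover have "Lset \<subseteq> tmap ` topspace torus"
  proof
    fix S assume "S \<in> Lset"
    then obtain m where m: "m \<in> Mset" "S = einhat_pt (T m)" unfolding Lset_def by auto
    obtain r c s g h where r: "r > 0" "c\<^sup>2 + s\<^sup>2 = 1" "g\<^sup>2 + h\<^sup>2 = 1" "m = r *\<^sub>R modv c s g h"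
      using modv_surj[OF m(1)] by blast
    have "S = tmap (Complex c s, Complex g h)"
      unfolding tmap_def Q_def using m(2) r einhat_pt_scale T_scale by simp
    moreover have "(Complex c s, Complex g h) \<in> topspace torus"
      unfolding torus_def prod_topology_subtopology_eu using r
      by (simp add: mem_Times_iff norm_complex_def)
    ultimately show "S \<in> tmap ` topspace torus" by blast
  qed
  ultimately show ?thesis using LE by auto
qed

lemma torus_homeo: "subtopology EinHat Lset homeomorphic_space torus"
proof -
  have "homeomorphic_map torus (subtopology EinHat Lset) tmap"
  proof (rule bijective_closed_imp_homeomorphic_map[OF continuous_tmap _ tmap_surj tmap_inj])
    show "closed_map torus (subtopology EinHat Lset) tmap"
      by (rule continuous_imp_closed_map[OF continuous_tmap compact_torus])
         (simp add: Hausdorff_space_subtopology Hausdorff_EinHat)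
  qed
  then show ?thesis using homeomorphic_map_imp_homeomorphic_space homeomorphic_space_sym by blast
qed

end

lemma trig_shift: "sin (t + 2 * pi * of_int k) = sin t" "cos (t + 2 * pi * of_int k) = cos t"
  using sin_cos_eq_iff[of "t + 2 * pi * of_int k" t] by auto

lemma powi_m1: "((-1::real) powi n) = (if even n then 1 else -1)"
  by (simp add: power_int_minus_left)

lemma klein_self: "z \<in> klein_orbit z"
  unfolding klein_orbit_def by (auto intro!: exI[of _ 0])

lemma klein_memI: "w = ((-1) powi N * fst z + of_int M, snd z + of_int N) \<Longrightarrow> w \<in> klein_orbit z"
  unfolding klein_orbit_def by blast

lemma klein_orbit_trans:
  assumes "z' \<in> klein_orbit z"
  shows "klein_orbit z' \<subseteq> klein_orbit z"
proof
  obtain m n :: int where z': "z' = ((-1) powi n * fst z + of_int m, snd z + of_int n)"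
    using assms unfolding klein_orbit_def by auto
  fix w assume "w \<in> klein_orbit z'"
  then obtain m' n' :: int where w: "w = ((-1) powi n' * fst z' + of_int m', snd z' + of_int n')"
    unfolding klein_orbit_def by auto
  have "(-1::real) powi n' * (-1) powi n = (-1) powi (n' + n)"
    by (simp add: power_int_add)
  then have "w = ((-1) powi (n' + n) * fst z + of_int ((if even n' then m else - m) + m'), snd z + of_int (n' + n))"
    unfolding w z' by (simp add: algebra_simps powi_m1)
  then show "w \<in> klein_orbit z" by (rule klein_memI)
qed

lemma klein_orbit_sym:
  assumes "z' \<in> klein_orbit z"
  shows "z \<in> klein_orbit z'"
proof -
  obtain m n :: int where z': "z' = ((-1) powi n * fst z + of_int m, snd z + of_int n)"
    using assms unfolding klein_orbit_def by auto
  have "z = ((-1) powi (- n) * fst z' + of_int (- (if even n then m else - m)), snd z' + of_int (- n))"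
    unfolding z' by (simp add: algebra_simps powi_m1)
  then show ?thesis by (rule klein_memI)
qed

lemma klein_orbit_eq: "z' \<in> klein_orbit z \<Longrightarrow> klein_orbit z' = klein_orbit z"
  using klein_orbit_trans klein_orbit_sym by blast

lemma klein_orbit_eqD: "klein_orbit z' = klein_orbit z \<Longrightarrow> z' \<in> klein_orbit z"
  using klein_self by blast

lemma quotient_klein: "quotient_map euclidean klein_bottle klein_orbit"
  unfolding klein_bottle_def by (rule quotient_map_quot)

lemma topspace_klein: "topspace klein_bottle = range klein_orbit"
  unfolding klein_bottle_def by simp

lemma compact_klein: "compact_space klein_bottle"
proof -
  let ?B = "cbox (0::real, 0::real) (1, 1)"
  have "range klein_orbit \<subseteq> klein_orbit ` ?B"
  proof
    fix Ob assume "Ob \<in> range klein_orbit"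
    then obtain x y where Ob: "Ob = klein_orbit (x, y)" by auto
    define n where "n = - \<lfloor>y\<rfloor>"
    define x' where "x' = (-1) powi n * x"
    define m where "m = - \<lfloor>x'\<rfloor>"
    let ?z = "(x' + of_int m, y + of_int n)"
    have "?z \<in> klein_orbit (x, y)" unfolding klein_orbit_def x'_def by auto
    then have "klein_orbit ?z = Ob" using Ob klein_orbit_eq by simp
    moreover have "?z \<in> ?B"
    proof -
      have f1: "of_int \<lfloor>x'\<rfloor> \<le> x'" "x' < of_int \<lfloor>x'\<rfloor> + 1"
        using of_int_floor_le[of x'] real_of_int_floor_add_one_gt[of x'] by simp_all
      have f2: "of_int \<lfloor>y\<rfloor> \<le> y" "y < of_int \<lfloor>y\<rfloor> + 1"
        using of_int_floor_le[of y] real_of_int_floor_add_one_gt[of y] by simp_all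
      have "0 \<le> x' + of_int m" "x' + of_int m \<le> 1" unfolding m_def using f1 by (simp, linarith)+
      moreover have "0 \<le> y + of_int n" "y + of_int n \<le> 1" unfolding n_def using f2 by (simp, linarith)+
      ultimately show ?thesis by (simp add: cbox_Pair_eq)
    qed
    ultimately show "Ob \<in> klein_orbit ` ?B" by blast
  qed
  moreover have "compactin klein_bottle (klein_orbit ` ?B)"
    by (rule image_compactin[OF _ quotient_imp_continuous_map[OF quotient_klein]]) simp
  ultimately show ?thesis unfolding compact_space_def topspace_klein
    by (metis compactin_subset_topspace image_mono subset_antisym subset_UNIV topspace_klein)
qed

context cpl begin

definition kq :: "real \<times> real \<Rightarrow> real^5" where
  "kq z = Q (cos (pi * snd z)) (sin (pi * snd z)) (- sin (2 * pi * fst z)) (cos (2 * pi * fst z))"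

lemma kq_null: "kq z \<in> nullcone"
  unfolding kq_def by (rule Q_null) auto

lemma Q_neg: "Q (- c) (- s) (- g) h = - Q c s g h"
  unfolding Q_def modv_neg using T_scale[of "-1"] by simp

lemma kq_orbit:
  "kq ((-1) powi N * x + of_int m, y + of_int N) = (if even N then 1 else -1) *\<^sub>R kq (x, y)"
proof (cases "even N")
  case True
  then obtain K where K: "N = 2 * K" by (auto elim: evenE)
  have a: "pi * (y + of_int N) = pi * y + 2 * pi * of_int K" unfolding K by (simp add: algebra_simps)
  have b: "2 * pi * (x + of_int m) = 2 * pi * x + 2 * pi * of_int m" by (simp add: algebra_simps)
  have c: "(-1::real) powi N * x = x" using True by (simp add: powi_m1)
  show ?thesis using True unfolding kq_def fst_conv snd_conv a c b trig_shift by simp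
next
  case False
  then obtain K where K: "N = 2 * K + 1" by (auto elim: oddE)
  have a: "pi * (y + of_int N) = (pi * y + pi) + 2 * pi * of_int K" unfolding K by (simp add: algebra_simps)
  have b: "2 * pi * (- x + of_int m) = - (2 * pi * x) + 2 * pi * of_int m" by (simp add: algebra_simps)
  have c: "(-1::real) powi N * x = - x" using False by (simp add: powi_m1)
  have "kq ((-1) powi N * x + of_int m, y + of_int N) =
     Q (- cos (pi * y)) (- sin (pi * y)) (- (- sin (2 * pi * x))) (cos (2 * pi * x))"
    unfolding kq_def fst_conv snd_conv a c b trig_shift by simp
  also have "\<dots> = - kq (x, y)" unfolding kq_def fst_conv snd_conv by (rule Q_neg)
  finally show ?thesis using False by simp
qed

lemma kq_orbit_pt: "z' \<in> klein_orbit z \<Longrightarrow> ein_pt (kq z') = ein_pt (kq z)"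
proof -
  assume "z' \<in> klein_orbit z"
  then obtain m N :: int where z': "z' = ((-1) powi N * fst z + of_int m, snd z + of_int N)"
    unfolding klein_orbit_def by auto
  have "kq z' = (if even N then 1 else -1) *\<^sub>R kq z"
    unfolding z' using kq_orbit[of N "fst z" m "snd z"] by simp
  then show ?thesis using ein_pt_scale by (simp split: if_splits)
qed

definition kmap :: "(real \<times> real) set \<Rightarrow> (real^5) set" where
  "kmap Ob = ein_pt (kq (SOME z. z \<in> topspace euclidean \<and> klein_orbit z = Ob))"

lemma kmap_props:
  shows "continuous_map klein_bottle Ein kmap" and "\<And>z. kmap (klein_orbit z) = ein_pt (kq z)"
proof -
  have cG: "continuous_map euclidean Ein (\<lambda>z. ein_pt (kq z))"
  proof -
    have "continuous_on UNIV kq" unfolding kq_def Q_def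
      by (rule continuous_on_compose2[OF continuous_T[of UNIV] continuous_modv])
         (auto intro!: continuous_intros)
    then have "continuous_map euclidean (top_of_set nullcone) kq"
      using kq_null by (simp add: continuous_map_in_subtopology)
    then have "continuous_map euclidean Ein (ein_pt \<circ> kq)"
      by (rule continuous_map_compose[OF _ quotient_imp_continuous_map[OF quotient_Ein]])
    then show ?thesis by (simp add: o_def)
  qed
  have inv: "\<And>x y. x \<in> topspace euclidean \<Longrightarrow> y \<in> topspace euclidean \<Longrightarrow>
      klein_orbit x = klein_orbit y \<Longrightarrow> ein_pt (kq x) = ein_pt (kq y)"
  proof -
    fix x y assume "klein_orbit x = klein_orbit y"
    then show "ein_pt (kq x) = ein_pt (kq y)" by (rule kq_orbit_pt[OF klein_orbit_eqD])
  qed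
  note q = quot_induced[OF quotient_klein cG inv]
  show "continuous_map klein_bottle Ein kmap" using q(1) unfolding kmap_def .
  show "kmap (klein_orbit z) = ein_pt (kq z)" for z
  proof -
    have t: "z \<in> topspace euclidean" by simp
    show ?thesis unfolding kmap_def
      by (rule some_inv[where G="\<lambda>z. ein_pt (kq z)" and f=klein_orbit, OF t inv])
  qed
qed

lemma kmap_image: "kmap ` topspace klein_bottle = Cb"
proof (intro equalityI subsetI)
  fix S assume "S \<in> kmap ` topspace klein_bottle"
  then obtain z where "S = ein_pt (kq z)" unfolding topspace_klein using kmap_props(2) by auto
  then show "S \<in> Cb" unfolding Cb_def kq_def Q_def using modv_in by auto
next
  fix S assume "S \<in> Cb"
  then obtain m where m: "m \<in> Mset" "S = ein_pt (T m)" unfolding Cb_def by auto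
  obtain r c s g h where r: "r > 0" "c\<^sup>2 + s\<^sup>2 = 1" "g\<^sup>2 + h\<^sup>2 = 1" "m = r *\<^sub>R modv c s g h"
    using modv_surj[OF m(1)] by blast
  obtain t where t: "c = cos t" "s = sin t" using sincos_total_2pi[OF r(2)] by metis
  have "h\<^sup>2 + (- g)\<^sup>2 = 1" using r(3) by simp
  then obtain u where u: "h = cos u" "- g = sin u" using sincos_total_2pi by metis
  have gu: "g = - sin u" using u by simp
  have "kq (u / (2 * pi), t / pi) = Q c s g h" unfolding kq_def using t u gu by simp
  then have "S = kmap (klein_orbit (u / (2 * pi), t / pi))"
    unfolding kmap_props(2) m(2) r(4) Q_def T_scale using r(1) ein_pt_scale by simp
  then show "S \<in> kmap ` topspace klein_bottle" unfolding topspace_klein by blast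
qed

lemma kmap_inj: "inj_on kmap (topspace klein_bottle)"
proof (rule inj_onI)
  fix Ob Ob' assume "Ob \<in> topspace klein_bottle" "Ob' \<in> topspace klein_bottle" and eq: "kmap Ob = kmap Ob'"
  then obtain x y x' y' where Ob: "Ob = klein_orbit (x, y)" and Ob': "Ob' = klein_orbit (x', y')"
    unfolding topspace_klein by auto
  have "ein_pt (kq (x, y)) = ein_pt (kq (x', y'))" using eq unfolding Ob Ob' kmap_props(2) .
  then obtain a where "a \<noteq> 0" "kq (x', y') = a *\<^sub>R kq (x, y)" using ein_pt_eq by blast
  then have "modv (cos (pi * y')) (sin (pi * y')) (- sin (2 * pi * x')) (cos (2 * pi * x')) =
             a *\<^sub>R modv (cos (pi * y)) (sin (pi * y)) (- sin (2 * pi * x)) (cos (2 * pi * x))"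
    unfolding kq_def by (intro Q_eq_scale) simp
  from modv_inj[OF _ _ _ _ this]
  have cases: "(cos (pi * y') = cos (pi * y) \<and> sin (pi * y') = sin (pi * y) \<and>
              sin (2 * pi * x') = sin (2 * pi * x) \<and> cos (2 * pi * x') = cos (2 * pi * x)) \<or>
             (cos (pi * y') = - cos (pi * y) \<and> sin (pi * y') = - sin (pi * y) \<and>
              sin (2 * pi * x') = - sin (2 * pi * x) \<and> cos (2 * pi * x') = cos (2 * pi * x))"
    by auto
  have "(x', y') \<in> klein_orbit (x, y)"
    using cases
  proof
    assume A: "cos (pi * y') = cos (pi * y) \<and> sin (pi * y') = sin (pi * y) \<and>
              sin (2 * pi * x') = sin (2 * pi * x) \<and> cos (2 * pi * x') = cos (2 * pi * x)"
    then obtain k :: int where k: "pi * y' = pi * y + 2 * pi * k" using sin_cos_eq_iff by metis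
    obtain j :: int where j: "2 * pi * x' = 2 * pi * x + 2 * pi * j" using A sin_cos_eq_iff by metis
    have "pi * y' = pi * (y + of_int (2 * k))" using k by (simp add: algebra_simps)
    then have "y' = y + of_int (2 * k)" by simp
    moreover have "2 * pi * x' = 2 * pi * (x + of_int j)" using j by (simp add: algebra_simps)
    then have "x' = x + of_int j" by simp
    ultimately have "(x', y') = ((-1) powi (2 * k) * x + of_int j, y + of_int (2 * k))"
      by (simp add: powi_m1)
    then show ?thesis using klein_memI[where N="2 * k" and M=j and z="(x, y)"] by simp
  next
    assume A: "cos (pi * y') = - cos (pi * y) \<and> sin (pi * y') = - sin (pi * y) \<and>
              sin (2 * pi * x') = - sin (2 * pi * x) \<and> cos (2 * pi * x') = cos (2 * pi * x)"
    then have "sin (pi * y') = sin (pi * y + pi) \<and> cos (pi * y') = cos (pi * y + pi)" by simp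
    then obtain k :: int where k: "pi * y' = (pi * y + pi) + 2 * pi * k" using sin_cos_eq_iff by metis
    have "sin (2 * pi * x') = sin (- (2 * pi * x)) \<and> cos (2 * pi * x') = cos (- (2 * pi * x))" using A by simp
    then obtain j :: int where j: "2 * pi * x' = - (2 * pi * x) + 2 * pi * j" using sin_cos_eq_iff by metis
    have "pi * y' = pi * (y + of_int (2 * k + 1))" using k by (simp add: algebra_simps)
    then have "y' = y + of_int (2 * k + 1)" by simp
    moreover have "2 * pi * x' = 2 * pi * (- x + of_int j)" using j by (simp add: algebra_simps)
    then have "x' = - x + of_int j" by simp
    ultimately have "(x', y') = ((-1) powi (2 * k + 1) * x + of_int j, y + of_int (2 * k + 1))"
      by (simp add: powi_m1)
    then show ?thesis using klein_memI[where N="2 * k + 1" and M=j and z="(x, y)"] by simp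
  qed
  then show "Ob = Ob'" unfolding Ob Ob' using klein_orbit_eq by simp
qed

lemma klein_homeo: "subtopology Ein Cb homeomorphic_space klein_bottle"
proof -
  have "\<forall>x \<in> topspace klein_bottle. kmap x \<in> Cb" using kmap_image by blast
  then have c: "continuous_map klein_bottle (subtopology Ein Cb) kmap"
    using kmap_props(1) by (simp add: continuous_map_in_subtopology Pi_iff)
  have "homeomorphic_map klein_bottle (subtopology Ein Cb) kmap"
  proof (rule bijective_closed_imp_homeomorphic_map[OF c _ _ kmap_inj])
    show "closed_map klein_bottle (subtopology Ein Cb) kmap"
      by (rule continuous_imp_closed_map[OF c compact_klein])
         (simp add: Hausdorff_space_subtopology Hausdorff_Ein)
    show "kmap ` topspace klein_bottle = topspace (subtopology Ein Cb)"
      using kmap_image Cb_sub by auto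
  qed
  then show ?thesis using homeomorphic_map_imp_homeomorphic_space homeomorphic_space_sym by blast
qed

end

context cpl begin

lemma TM_scale: "w \<in> T ` Mset \<Longrightarrow> a \<noteq> 0 \<Longrightarrow> a *\<^sub>R w \<in> T ` Mset"
proof -
  assume "w \<in> T ` Mset" "a \<noteq> 0"
  then obtain m where "m \<in> Mset" "w = T m" by auto
  then have "a *\<^sub>R w = T (a *\<^sub>R m)" "a *\<^sub>R m \<in> Mset" using T_scale Mset_scale \<open>a \<noteq> 0\<close> by auto
  then show ?thesis by blast
qed

lemma TM_null: "w \<in> T ` Mset \<Longrightarrow> w \<in> nullcone" using T_Mset_null by auto

lemma Lset_sub: "Lset \<subseteq> topspace EinHat"
  unfolding Lset_def topspace_EinHat using T_Mset_null by auto

definition Oset :: "real^5 \<Rightarrow> (real^5) set set" where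
  "Oset w0 = ein_pt ` {w \<in> nullcone. inner w w0 \<noteq> 0}"

definition Vset :: "real \<Rightarrow> real^5 \<Rightarrow> (real^5) set set" where
  "Vset e w0 = einhat_pt ` {w \<in> nullcone. e * inner w w0 > 0}"

definition Uset :: "real \<Rightarrow> real^5 \<Rightarrow> (real^5) set set" where
  "Uset e w0 = einhat_pt ` {w \<in> T ` Mset. e * inner w w0 > 0}"

definition qe :: "real \<Rightarrow> real^5 \<Rightarrow> (real^5) set \<Rightarrow> (real^5) set" where
  "qe e w0 S = {u \<in> S. e * inner u w0 > 0}"

definition sig :: "real \<Rightarrow> real^5 \<Rightarrow> real^5 \<Rightarrow> real^5" where
  "sig e w0 w = (e * sgn (inner w w0)) *\<^sub>R w"

lemma pre_O: "{w \<in> topspace (top_of_set nullcone). ein_pt w \<in> Oset w0} = {w \<in> nullcone. inner w w0 \<noteq> 0}"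
proof (intro equalityI subsetI)
  fix w assume "w \<in> {w \<in> topspace (top_of_set nullcone). ein_pt w \<in> Oset w0}"
  then obtain w' where w: "w \<in> nullcone" "ein_pt w = ein_pt w'" "inner w' w0 \<noteq> 0"
    unfolding Oset_def by auto
  then obtain a where "a \<noteq> 0" "w = a *\<^sub>R w'" using ein_pt_eq[of w' w] by metis
  then show "w \<in> {w \<in> nullcone. inner w w0 \<noteq> 0}" using w by simp
qed (auto simp: Oset_def)

lemma pre_V: "{w \<in> topspace (top_of_set nullcone). einhat_pt w \<in> Vset e w0} = {w \<in> nullcone. e * inner w w0 > 0}"
proof (intro equalityI subsetI)
  fix w assume "w \<in> {w \<in> topspace (top_of_set nullcone). einhat_pt w \<in> Vset e w0}"
  then obtain w' where w: "w \<in> nullcone" "einhat_pt w = einhat_pt w'" "e * inner w' w0 > 0"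
    unfolding Vset_def by auto
  then obtain a where a: "a > 0" "w = a *\<^sub>R w'" using einhat_pt_eq[of w' w] by metis
  have eqn: "e * inner w w0 = a * (e * inner w' w0)" using a by simp
  have pos: "a * (e * inner w' w0) > 0" using a(1) w(3) by (rule mult_pos_pos)
  have "e * inner w w0 > 0" unfolding eqn by (rule pos)
  then show "w \<in> {w \<in> nullcone. e * inner w w0 > 0}" using w by simp
qed (auto simp: Vset_def)

lemma open_O: "openin Ein (Oset w0)"
  unfolding Ein_def openin_quot
proof
  show "Oset w0 \<subseteq> ein_pt ` topspace (top_of_set nullcone)" unfolding Oset_def by auto
  have "openin (top_of_set nullcone) (nullcone \<inter> {w. inner w w0 \<noteq> 0})"
    by (intro openin_open_Int open_Collect_neq continuous_intros)
  moreover have "nullcone \<inter> {w. inner w w0 \<noteq> 0} = {w \<in> nullcone. inner w w0 \<noteq> 0}" by auto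
  ultimately show "openin (top_of_set nullcone) {x \<in> topspace (top_of_set nullcone). ein_pt x \<in> Oset w0}"
    unfolding pre_O by simp
qed

lemma open_V: "openin EinHat (Vset e w0)"
  unfolding EinHat_def openin_quot
proof
  show "Vset e w0 \<subseteq> einhat_pt ` topspace (top_of_set nullcone)" unfolding Vset_def by auto
  have "openin (top_of_set nullcone) (nullcone \<inter> {w. 0 < e * inner w w0})"
    by (intro openin_open_Int open_Collect_less continuous_intros)
  moreover have "nullcone \<inter> {w. 0 < e * inner w w0} = {w \<in> nullcone. e * inner w w0 > 0}" by auto
  ultimately show "openin (top_of_set nullcone) {x \<in> topspace (top_of_set nullcone). einhat_pt x \<in> Vset e w0}"
    unfolding pre_V by simp
qed

lemma Lset_rep: "x \<in> Lset \<Longrightarrow> \<exists>w. w \<in> T ` Mset \<and> x = einhat_pt w"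
  unfolding Lset_def by auto

lemma Uset_eq: "Uset e w0 = Lset \<inter> Vset e w0"
proof (intro equalityI subsetI)
  fix x assume "x \<in> Uset e w0"
  then obtain w where "w \<in> T ` Mset" "e * inner w w0 > 0" "x = einhat_pt w" unfolding Uset_def by auto
  then show "x \<in> Lset \<inter> Vset e w0" unfolding Lset_def Vset_def using TM_null by auto
next
  fix x assume x: "x \<in> Lset \<inter> Vset e w0"
  then obtain w where w: "w \<in> nullcone" "e * inner w w0 > 0" "x = einhat_pt w" unfolding Vset_def by auto
  then have "w \<in> T ` Mset" using x TM_sat_hat unfolding Lset_def by auto
  then show "x \<in> Uset e w0" unfolding Uset_def using w by auto
qed

lemma Uset_sub: "Uset e w0 \<subseteq> Lset" unfolding Uset_eq by auto

lemma openin_U: "openin (subtopology EinHat Lset) (Uset e w0)"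
  unfolding Uset_eq by (rule openin_subtopology_Int2[OF open_V])

definition Tset :: "real^5 \<Rightarrow> (real^5) set set" where "Tset w0 = Cb \<inter> Oset w0"

lemma openin_T: "openin (subtopology Ein Cb) (Tset w0)"
  unfolding Tset_def by (rule openin_subtopology_Int2[OF open_O])

lemma Cb_rep: "y \<in> Cb \<Longrightarrow> \<exists>w. w \<in> T ` Mset \<and> y = ein_pt w"
  unfolding Cb_def by auto

lemma Tset_rep: "y \<in> Tset w0 \<Longrightarrow> \<exists>w. w \<in> T ` Mset \<and> inner w w0 \<noteq> 0 \<and> y = ein_pt w"
proof -
  assume y: "y \<in> Tset w0"
  then obtain w where w: "w \<in> T ` Mset" "y = ein_pt w" unfolding Tset_def Cb_def by auto
  then have "w \<in> {w \<in> topspace (top_of_set nullcone). ein_pt w \<in> Oset w0}"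
    using y TM_null unfolding Tset_def by auto
  then have "inner w w0 \<noteq> 0" unfolding pre_O by simp
  then show ?thesis using w by blast
qed

lemma sgn_self_mult: "sgn (x::real) * x = \<bar>x\<bar>" by (simp add: sgn_real_def)

lemma e_cases: "e = 1 \<or> e = -1 \<Longrightarrow> e * e = (1::real)" by auto

lemma sgn_sq: "x \<noteq> 0 \<Longrightarrow> sgn x * sgn x = (1::real)" by (simp add: sgn_real_def)

lemma qe_pt:
  assumes e: "e = 1 \<or> e = -1" and w: "inner w w0 \<noteq> 0"
  shows "qe e w0 (ein_pt w) = einhat_pt (sig e w0 w)"
proof (intro equalityI subsetI)
  let ?k = "e * sgn (inner w w0)"
  have k2: "?k * ?k = 1" using e_cases[OF e] sgn_sq[OF w] by (simp add: algebra_simps)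
  fix u
  { assume "u \<in> qe e w0 (ein_pt w)"
    then obtain c where c: "c \<noteq> 0" "u = c *\<^sub>R w" "e * inner u w0 > 0" unfolding qe_def ein_pt_def by auto
    have pos: "c * ?k > 0"
    proof -
      have "0 < e * (c * inner w w0)" using c by simp
      also have "\<dots> = (c * ?k) * \<bar>inner w w0\<bar>"
      proof -
        have xs: "inner w w0 = sgn (inner w w0) * \<bar>inner w w0\<bar>" by (simp add: sgn_mult_abs)
        show ?thesis by (subst (1) xs) (simp add: algebra_simps)
      qed
      finally show ?thesis using w by (simp add: zero_less_mult_iff)
    qed
    have "u = (c * ?k) *\<^sub>R (?k *\<^sub>R w)" using c k2 by (simp add: algebra_simps)
    then show "u \<in> einhat_pt (sig e w0 w)" unfolding sig_def einhat_pt_def using pos by blast }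
  { assume "u \<in> einhat_pt (sig e w0 w)"
    then obtain d where d: "d > 0" "u = d *\<^sub>R (?k *\<^sub>R w)" unfolding sig_def einhat_pt_def by auto
    have k0: "?k \<noteq> 0" using k2 by auto
    have "e * inner u w0 = d * (e * e) * (sgn (inner w w0) * inner w w0)" using d by (simp add: algebra_simps)
    also have "\<dots> = d * \<bar>inner w w0\<bar>" using e_cases[OF e] by (simp add: sgn_self_mult)
    finally have eqn: "e * inner u w0 = d * \<bar>inner w w0\<bar>" .
    have "d * \<bar>inner w w0\<bar> > 0" using d w by simp
    then have "e * inner u w0 > 0" unfolding eqn .
    moreover have "u \<in> ein_pt w" unfolding ein_pt_def using d k0 by auto
    ultimately show "u \<in> qe e w0 (ein_pt w)" unfolding qe_def by auto }
qed

lemma sig_props: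
  assumes e: "e = 1 \<or> e = -1" and w: "w \<in> T ` Mset" and nz: "inner w w0 \<noteq> 0"
  shows "sig e w0 w \<in> T ` Mset" "e * inner (sig e w0 w) w0 > 0" "ein_pt (sig e w0 w) = ein_pt w"
proof -
  have k0: "e * sgn (inner w w0) \<noteq> 0" using e nz by (auto simp: sgn_real_def)
  show "sig e w0 w \<in> T ` Mset" unfolding sig_def using TM_scale[OF w k0] .
  have "e * inner (sig e w0 w) w0 = (e * e) * (sgn (inner w w0) * inner w w0)"
    unfolding sig_def by (simp add: algebra_simps)
  also have "\<dots> = \<bar>inner w w0\<bar>" using e_cases[OF e] by (simp add: sgn_self_mult)
  finally show "e * inner (sig e w0 w) w0 > 0" using nz by simp
  show "ein_pt (sig e w0 w) = ein_pt w" unfolding sig_def using ein_pt_scale[OF k0] .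
qed

lemma sig_self:
  assumes e: "e = 1 \<or> e = -1" and pos: "e * inner w w0 > 0"
  shows "sig e w0 w = w"
proof -
  have "sgn (inner w w0) = e" using e pos by (auto simp: sgn_real_def zero_less_mult_iff)
  then show ?thesis unfolding sig_def using e_cases[OF e] by simp
qed

lemma continuous_qe:
  assumes e: "e = 1 \<or> e = -1"
  shows "continuous_map (subtopology Ein (Tset w0)) (subtopology EinHat (Uset e w0)) (qe e w0)"
proof -
  let ?O = "Oset w0"
  let ?AO = "{w \<in> nullcone. inner w w0 \<noteq> 0}"
  let ?AT = "{w \<in> T ` Mset. inner w w0 \<noteq> 0}"
  have q1: "quotient_map (subtopology (top_of_set nullcone) ?AO) (subtopology Ein ?O) ein_pt"
    by (rule quotient_map_restriction[OF quotient_Ein pre_O]) (simp add: open_O)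
  have cl: "closedin (subtopology Ein ?O) (?O \<inter> Cb)"
    by (rule closedin_subtopology_Int_closed[OF closedin_Cb])
  have preT: "{x \<in> topspace (subtopology (top_of_set nullcone) ?AO). ein_pt x \<in> ?O \<inter> Cb} = ?AT"
  proof (intro equalityI subsetI)
    fix x assume "x \<in> {x \<in> topspace (subtopology (top_of_set nullcone) ?AO). ein_pt x \<in> ?O \<inter> Cb}"
    then show "x \<in> ?AT" using TM_sat by auto
  next
    fix x assume x: "x \<in> ?AT"
    then have "x \<in> nullcone" using TM_null by auto
    then show "x \<in> {x \<in> topspace (subtopology (top_of_set nullcone) ?AO). ein_pt x \<in> ?O \<inter> Cb}"
      using x unfolding Oset_def Cb_def by auto
  qed
  have q2: "quotient_map (subtopology (subtopology (top_of_set nullcone) ?AO) ?AT)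
      (subtopology (subtopology Ein ?O) (?O \<inter> Cb)) ein_pt"
    by (rule quotient_map_restriction[OF q1 preT]) (simp add: cl)
  have s1: "subtopology (subtopology (top_of_set nullcone) ?AO) ?AT = top_of_set ?AT"
    using TM_null by (auto simp: subtopology_subtopology intro!: arg_cong[where f="top_of_set"])
  have s2: "subtopology (subtopology Ein ?O) (?O \<inter> Cb) = subtopology Ein (Tset w0)"
    unfolding subtopology_subtopology Tset_def by (simp add: Int_commute Int_left_commute)
  have q3: "quotient_map (top_of_set ?AT) (subtopology Ein (Tset w0)) ein_pt"
    using q2 unfolding s1 s2 .
  have csig: "continuous_on ?AT (sig e w0)"
    unfolding sig_def by (intro continuous_intros) auto
  have "continuous_map (top_of_set ?AT) (top_of_set nullcone) (sig e w0)"
    using csig sig_props[OF e] TM_null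
    by (auto simp: continuous_map_in_subtopology continuous_map_iff_continuous)
  then have "continuous_map (top_of_set ?AT) EinHat (einhat_pt \<circ> sig e w0)"
    by (rule continuous_map_compose[OF _ quotient_imp_continuous_map[OF quotient_EinHat]])
  moreover have "\<forall>w \<in> ?AT. einhat_pt (sig e w0 w) \<in> Uset e w0"
    using sig_props[OF e] unfolding Uset_def by auto
  ultimately have "continuous_map (top_of_set ?AT) (subtopology EinHat (Uset e w0)) (einhat_pt \<circ> sig e w0)"
    by (auto simp: continuous_map_in_subtopology)
  then have "continuous_map (top_of_set ?AT) (subtopology EinHat (Uset e w0)) (qe e w0 \<circ> ein_pt)"
    by (rule continuous_map_eq) (simp add: qe_pt[OF e])
  then show ?thesis using continuous_compose_quotient_map[OF q3] by blast
qed

lemma homeo_sheet: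
  assumes e: "e = 1 \<or> e = -1"
  shows "homeomorphic_maps (subtopology (subtopology EinHat Lset) (Uset e w0))
            (subtopology (subtopology Ein Cb) (Tset w0)) ein_cover (qe e w0)"
proof -
  have X: "subtopology (subtopology EinHat Lset) (Uset e w0) = subtopology EinHat (Uset e w0)"
    unfolding subtopology_subtopology using Uset_sub by (simp add: Int_absorb1)
  have Y: "subtopology (subtopology Ein Cb) (Tset w0) = subtopology Ein (Tset w0)"
    unfolding subtopology_subtopology Tset_def by (simp add: Int_absorb1)
  have img: "\<forall>x \<in> Uset e w0. ein_cover x \<in> Tset w0"
  proof
    fix x assume "x \<in> Uset e w0"
    then obtain w where w: "w \<in> T ` Mset" "e * inner w w0 > 0" "x = einhat_pt w" unfolding Uset_def by auto
    then have "inner w w0 \<noteq> 0" by auto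
    then show "ein_cover x \<in> Tset w0" unfolding Tset_def Cb_def Oset_def using w TM_null
      by (auto simp: ein_cover_hat)
  qed
  have c1: "continuous_map (subtopology EinHat (Uset e w0)) (subtopology Ein (Tset w0)) ein_cover"
    using continuous_map_from_subtopology[OF continuous_ein_cover] img Uset_sub Lset_sub
    by (auto simp: continuous_map_in_subtopology)
  have inv1: "\<forall>x \<in> topspace (subtopology EinHat (Uset e w0)). qe e w0 (ein_cover x) = x"
  proof
    fix x assume "x \<in> topspace (subtopology EinHat (Uset e w0))"
    then obtain w where w: "w \<in> T ` Mset" "e * inner w w0 > 0" "x = einhat_pt w" unfolding Uset_def by auto
    then have "inner w w0 \<noteq> 0" by auto
    then show "qe e w0 (ein_cover x) = x" using w qe_pt[OF e] sig_self[OF e] by (simp add: ein_cover_hat)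
  qed
  have inv2: "\<forall>y \<in> topspace (subtopology Ein (Tset w0)). ein_cover (qe e w0 y) = y"
  proof
    fix y assume "y \<in> topspace (subtopology Ein (Tset w0))"
    then have "y \<in> Tset w0" by simp
    then obtain w where w: "w \<in> T ` Mset" "inner w w0 \<noteq> 0" "y = ein_pt w" using Tset_rep by blast
    then show "ein_cover (qe e w0 y) = y" using qe_pt[OF e] sig_props[OF e] by (simp add: ein_cover_hat)
  qed
  show ?thesis unfolding X Y homeomorphic_maps_def using c1 continuous_qe[OF e] inv1 inv2 by blast
qed

lemma double_cover: "double_covering_map (subtopology EinHat Lset) (subtopology Ein Cb) ein_cover"
  unfolding double_covering_map_def covering_map_def
proof (intro conjI ballI)
  have tX: "topspace (subtopology EinHat Lset) = Lset" using Lset_sub by auto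
  have tY: "topspace (subtopology Ein Cb) = Cb" using Cb_sub by auto
  have img: "ein_cover ` Lset = Cb"
    unfolding Lset_def Cb_def by (auto simp: ein_cover_hat image_image)
  show "continuous_map (subtopology EinHat Lset) (subtopology Ein Cb) ein_cover"
    using continuous_map_from_subtopology[OF continuous_ein_cover] img
    by (auto simp: continuous_map_in_subtopology)
  show "ein_cover ` topspace (subtopology EinHat Lset) = topspace (subtopology Ein Cb)"
    using tX tY img by simp
  fix y assume y: "y \<in> topspace (subtopology Ein Cb)"
  have "y \<in> Cb" using y tY by simp
  then obtain w0 where w0: "w0 \<in> T ` Mset" "y = ein_pt w0" using Cb_rep by blast
  have w0nz: "w0 \<noteq> 0" using TM_null[OF w0(1)] nullcone_nz by blast
  show "\<exists>Ts. y \<in> Ts \<and> openin (subtopology Ein Cb) Ts \<and>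
          (\<exists>v. \<Union> v = {x \<in> topspace (subtopology EinHat Lset). ein_cover x \<in> Ts} \<and>
               (\<forall>u\<in>v. openin (subtopology EinHat Lset) u) \<and> pairwise disjnt v \<and>
               (\<forall>u\<in>v. \<exists>q. homeomorphic_maps (subtopology (subtopology EinHat Lset) u)
                              (subtopology (subtopology Ein Cb) Ts) ein_cover q))"
  proof (intro exI conjI)
    show "y \<in> Tset w0" unfolding Tset_def Oset_def Cb_def using w0 w0nz TM_null by auto
    show "openin (subtopology Ein Cb) (Tset w0)" by (rule openin_T)
    show "\<Union> {Uset 1 w0, Uset (-1) w0} = {x \<in> topspace (subtopology EinHat Lset). ein_cover x \<in> Tset w0}"
    proof (intro equalityI subsetI)
      fix x assume "x \<in> \<Union> {Uset 1 w0, Uset (-1) w0}"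
      then obtain e where e: "e = 1 \<or> e = -1" "x \<in> Uset e w0" by auto
      then obtain w where w: "w \<in> T ` Mset" "e * inner w w0 > 0" "x = einhat_pt w" unfolding Uset_def by auto
      then have "inner w w0 \<noteq> 0" by auto
      then have "ein_cover x \<in> Tset w0" unfolding Tset_def Cb_def Oset_def using w TM_null
        by (auto simp: ein_cover_hat)
      then show "x \<in> {x \<in> topspace (subtopology EinHat Lset). ein_cover x \<in> Tset w0}"
        using e Uset_sub tX by auto
    next
      fix x assume "x \<in> {x \<in> topspace (subtopology EinHat Lset). ein_cover x \<in> Tset w0}"
      then have x: "x \<in> Lset" "ein_cover x \<in> Tset w0" using tX by auto
      then obtain w where w: "w \<in> T ` Mset" "x = einhat_pt w" using Lset_rep by blast
      have "w \<in> {w \<in> topspace (top_of_set nullcone). ein_pt w \<in> Oset w0}"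
        using x(2) w TM_null unfolding Tset_def by (auto simp: ein_cover_hat)
      then have "inner w w0 \<noteq> 0" unfolding pre_O by simp
      then have "inner w w0 > 0 \<or> -1 * inner w w0 > 0" by auto
      then show "x \<in> \<Union> {Uset 1 w0, Uset (-1) w0}" unfolding Uset_def using w by auto
    qed
    show "\<forall>u\<in>{Uset 1 w0, Uset (-1) w0}. openin (subtopology EinHat Lset) u"
      using openin_U by auto
    show "pairwise disjnt {Uset 1 w0, Uset (-1) w0}"
    proof -
      have "disjnt (Uset 1 w0) (Uset (-1) w0)"
        unfolding disjnt_def
      proof (rule ccontr)
        assume "Uset 1 w0 \<inter> Uset (-1) w0 \<noteq> {}"
        then obtain w w' where w: "inner w w0 > 0" "- inner w' w0 > 0" "einhat_pt w = einhat_pt w'"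
          unfolding Uset_def by auto
        then obtain a where "a > 0" "w' = a *\<^sub>R w" using einhat_pt_eq by metis
        then show False using w by (auto simp: mult_less_0_iff)
      qed
      then show ?thesis unfolding pairwise_def by (auto simp: disjnt_sym)
    qed
    show "\<forall>u\<in>{Uset 1 w0, Uset (-1) w0}. \<exists>q. homeomorphic_maps (subtopology (subtopology EinHat Lset) u)
              (subtopology (subtopology Ein Cb) (Tset w0)) ein_cover q"
      using homeo_sheet[of 1 w0] homeo_sheet[of "-1" w0] by auto
  qed
next
  fix y assume y: "y \<in> topspace (subtopology Ein Cb)"
  then have "y \<in> Cb" using Cb_sub by auto
  then obtain w where w: "w \<in> T ` Mset" "y = ein_pt w" using Cb_rep by blast
  have wnz: "w \<noteq> 0" using TM_null[OF w(1)] nullcone_nz by blast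
  have tX: "topspace (subtopology EinHat Lset) = Lset" using Lset_sub by auto
  have eq: "{x \<in> topspace (subtopology EinHat Lset). ein_cover x = y} = {einhat_pt w, einhat_pt (- w)}"
  proof (intro equalityI subsetI)
    fix x assume "x \<in> {x \<in> topspace (subtopology EinHat Lset). ein_cover x = y}"
    then have x: "x \<in> Lset" "ein_cover x = y" using tX by auto
    then obtain w' where w': "w' \<in> T ` Mset" "x = einhat_pt w'" using Lset_rep by blast
    then have "ein_pt w = ein_pt w'" using x w by (simp add: ein_cover_hat)
    then obtain a where a: "a \<noteq> 0" "w' = a *\<^sub>R w" using ein_pt_eq by blast
    show "x \<in> {einhat_pt w, einhat_pt (- w)}"
    proof (cases "a > 0")
      case True then show ?thesis using w' a einhat_pt_scale by simp
    next
      case False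
      then have na: "- a > 0" using a by simp
      have "einhat_pt (a *\<^sub>R w) = einhat_pt (- w)" using einhat_pt_scale[OF na, of "- w"] by simp
      then show ?thesis using w' a by simp
    qed
  next
    fix x assume x: "x \<in> {einhat_pt w, einhat_pt (- w)}"
    have mw: "- w \<in> T ` Mset" using TM_scale[OF w(1), of "-1"] by simp
    have "x \<in> Lset \<and> ein_cover x = y"
    proof (cases "x = einhat_pt w")
      case True
      then show ?thesis using w unfolding Lset_def by (simp add: ein_cover_hat)
    next
      case False
      then have "x = einhat_pt (- w)" using x by simp
      then show ?thesis using w mw unfolding Lset_def by (simp add: ein_cover_hat ein_pt_neg)
    qed
    then show "x \<in> {x \<in> topspace (subtopology EinHat Lset). ein_cover x = y}" using tX by simp
  qed
  have ne: "einhat_pt w \<noteq> einhat_pt (- w)"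
  proof
    assume "einhat_pt w = einhat_pt (- w)"
    then obtain a where a: "a > 0" "- w = a *\<^sub>R w" using einhat_pt_eq by blast
    have "(1 + a) *\<^sub>R w = w + a *\<^sub>R w" by (simp add: scaleR_add_left)
    also have "\<dots> = w + (- w)" using a(2) by simp
    finally have "(1 + a) *\<^sub>R w = 0" by simp
    then show False using a wnz by simp
  qed
  show "card {x \<in> topspace (subtopology EinHat Lset). ein_cover x = y} = 2"
    unfolding eq using ne by simp
qed

end

lemma span2_iff: "(x::real^3) \<in> span {a, b} \<longleftrightarrow> (\<exists>u v. x = u *\<^sub>R a + v *\<^sub>R b)"
proof -
  have "x \<in> span {a, b} \<longleftrightarrow> (\<exists>k. x - k *\<^sub>R a \<in> span {b})"
    unfolding span_insert[of a "{b}"] by simp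
  also have "\<dots> \<longleftrightarrow> (\<exists>k v. x - k *\<^sub>R a = v *\<^sub>R b)"
    unfolding span_singleton by auto
  also have "\<dots> \<longleftrightarrow> (\<exists>u v. x = u *\<^sub>R a + v *\<^sub>R b)"
    by (metis add.commute diff_add_cancel add_diff_cancel)
  finally show ?thesis .
qed

context cpl begin

lemma det_rels:
  "det3 u f1 (a *\<^sub>R f1 + c *\<^sub>R n) = c * det3 u f1 n"
  "det3 (a' *\<^sub>R f1 + b' *\<^sub>R f2 + c' *\<^sub>R n) f1 n = b' * det3 f2 f1 n"
  "det3 u f2 (b *\<^sub>R f2 + c *\<^sub>R n) = c * det3 u f2 n"
  "det3 (a' *\<^sub>R f1 + b' *\<^sub>R f2 + c' *\<^sub>R n) f2 n = - a' * det3 f2 f1 n"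
  by (simp_all add: det3_lin det3_swap12[of f1 f2])

lemma u0_props: "timelike (f1 + f2)" "mink (f1 + f2) f1 < 0" "mink (f1 + f2) f2 < 0"
  unfolding timelike_def by (simp_all add: mink_lin rels)

lemma wing_f1:
  "wing_plus p f1 = {p + a *\<^sub>R f1 + c *\<^sub>R n | a c. c * det3 f2 f1 n > 0}"
  "wing_minus p f1 = {p + a *\<^sub>R f1 + c *\<^sub>R n | a c. c * det3 f2 f1 n < 0}"
proof -
  let ?d = "det3 f2 f1 n"
  have orth: "mink w f1 = 0 \<longleftrightarrow> (\<exists>a c. w = a *\<^sub>R f1 + c *\<^sub>R n)" for w
  proof
    assume "mink w f1 = 0"
    then have "w = (-2 * mink w f2) *\<^sub>R f1 + (mink w n) *\<^sub>R n" using decomp[of w] by simp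
    then show "\<exists>a c. w = a *\<^sub>R f1 + c *\<^sub>R n" by blast
  qed (auto simp: mink_lin rels)
  have detu: "det3 u f1 (a *\<^sub>R f1 + c *\<^sub>R n) = (- 2 * mink u f1) * c * ?d" for u a c
  proof -
    have "det3 u f1 (a *\<^sub>R f1 + c *\<^sub>R n) = c * det3 u f1 n" by (rule det_rels(1))
    also have "det3 u f1 n = det3 ((-2 * mink u f2) *\<^sub>R f1 + (-2 * mink u f1) *\<^sub>R f2 + (mink u n) *\<^sub>R n) f1 n"
      using decomp[of u] by simp
    also have "\<dots> = (-2 * mink u f1) * ?d" by (rule det_rels(2))
    finally show ?thesis by simp
  qed
  have key: "(\<forall>u. timelike u \<and> mink u f1 < 0 \<longrightarrow> P (det3 u f1 (a *\<^sub>R f1 + c *\<^sub>R n))) \<longleftrightarrow> P' (c * ?d)"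
    if PP: "\<And>t x. t > 0 \<Longrightarrow> P (t * x) \<longleftrightarrow> P' x" for P P' a c
  proof
    assume "\<forall>u. timelike u \<and> mink u f1 < 0 \<longrightarrow> P (det3 u f1 (a *\<^sub>R f1 + c *\<^sub>R n))"
    then have "P (det3 (f1 + f2) f1 (a *\<^sub>R f1 + c *\<^sub>R n))" using u0_props by blast
    then have "P (1 * (c * ?d))" unfolding detu using u0_props by (simp add: mink_lin rels)
    then show "P' (c * ?d)" using PP[of 1] by simp
  next
    assume "P' (c * ?d)"
    show "\<forall>u. timelike u \<and> mink u f1 < 0 \<longrightarrow> P (det3 u f1 (a *\<^sub>R f1 + c *\<^sub>R n))"
    proof (intro allI impI)
      fix u assume "timelike u \<and> mink u f1 < 0"
      then have t: "-2 * mink u f1 > 0" by simp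
      have e: "det3 u f1 (a *\<^sub>R f1 + c *\<^sub>R n) = (-2 * mink u f1) * (c * ?d)" unfolding detu by simp
      show "P (det3 u f1 (a *\<^sub>R f1 + c *\<^sub>R n))" unfolding e
        using PP[OF t, of "c * ?d"] \<open>P' (c * ?d)\<close> by blast
    qed
  qed
  have kp: "(\<forall>u. timelike u \<and> mink u f1 < 0 \<longrightarrow> det3 u f1 (a *\<^sub>R f1 + c *\<^sub>R n) > 0) \<longleftrightarrow> c * ?d > 0" for a c
    using key[of "\<lambda>x. x > 0" "\<lambda>x. x > 0" a c] by (simp add: zero_less_mult_iff)
  have km: "(\<forall>u. timelike u \<and> mink u f1 < 0 \<longrightarrow> det3 u f1 (a *\<^sub>R f1 + c *\<^sub>R n) < 0) \<longleftrightarrow> c * ?d < 0" for a c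
    using key[of "\<lambda>x. x < 0" "\<lambda>x. x < 0" a c] by (simp add: mult_less_0_iff)
  show "wing_plus p f1 = {p + a *\<^sub>R f1 + c *\<^sub>R n | a c. c * ?d > 0}"
    unfolding wing_plus_def using orth kp by (auto simp: add.assoc) (metis add.assoc)+
  show "wing_minus p f1 = {p + a *\<^sub>R f1 + c *\<^sub>R n | a c. c * ?d < 0}"
    unfolding wing_minus_def using orth km by (auto simp: add.assoc) (metis add.assoc)+
qed

lemma wing_f2:
  assumes mu: "mu \<noteq> 0"
  shows "wing_plus p (mu *\<^sub>R f2) = {p + b *\<^sub>R f2 + c *\<^sub>R n | b c. c * det3 f2 f1 n < 0}"
    and "wing_minus p (mu *\<^sub>R f2) = {p + b *\<^sub>R f2 + c *\<^sub>R n | b c. c * det3 f2 f1 n > 0}"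
proof -
  let ?d = "det3 f2 f1 n"
  have orth: "mink w (mu *\<^sub>R f2) = 0 \<longleftrightarrow> (\<exists>b c. w = b *\<^sub>R f2 + c *\<^sub>R n)" for w
  proof
    assume "mink w (mu *\<^sub>R f2) = 0"
    then have "mink w f2 = 0" using mu by (simp add: mink_lin)
    then have "w = (-2 * mink w f1) *\<^sub>R f2 + (mink w n) *\<^sub>R n" using decomp[of w] by simp
    then show "\<exists>b c. w = b *\<^sub>R f2 + c *\<^sub>R n" by blast
  qed (auto simp: mink_lin rels)
  have detu: "det3 u (mu *\<^sub>R f2) (b *\<^sub>R f2 + c *\<^sub>R n) = (- 2 * mu * mink u f2) * (- (c * ?d))" for u b c
  proof -
    have "det3 u (mu *\<^sub>R f2) (b *\<^sub>R f2 + c *\<^sub>R n) = mu * (c * det3 u f2 n)"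
      using det_rels(3) by (simp add: det3_lin)
    also have "det3 u f2 n = det3 ((-2 * mink u f2) *\<^sub>R f1 + (-2 * mink u f1) *\<^sub>R f2 + (mink u n) *\<^sub>R n) f2 n"
      using decomp[of u] by simp
    also have "\<dots> = - (-2 * mink u f2) * ?d" by (rule det_rels(4))
    finally show ?thesis by (simp add: algebra_simps)
  qed
  let ?u0 = "sgn mu *\<^sub>R (f1 + f2)"
  have u0: "timelike ?u0" "mink ?u0 (mu *\<^sub>R f2) < 0" "- 2 * mu * mink ?u0 f2 = \<bar>mu\<bar>"
  proof -
    have s2: "sgn mu * sgn mu = 1" using mu by (simp add: sgn_real_def)
    show "timelike ?u0" unfolding timelike_def using s2 by (simp add: mink_lin rels algebra_simps)
    have sm: "sgn mu * mu = \<bar>mu\<bar>" by (simp add: sgn_real_def)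
    show "mink ?u0 (mu *\<^sub>R f2) < 0" using sm mu by (simp add: mink_lin rels algebra_simps)
    show "- 2 * mu * mink ?u0 f2 = \<bar>mu\<bar>" using sm by (simp add: mink_lin rels algebra_simps)
  qed
  have key: "(\<forall>u. timelike u \<and> mink u (mu *\<^sub>R f2) < 0 \<longrightarrow> P (det3 u (mu *\<^sub>R f2) (b *\<^sub>R f2 + c *\<^sub>R n))) \<longleftrightarrow> P' (- (c * ?d))"
    if PP: "\<And>t x. t > 0 \<Longrightarrow> P (t * x) \<longleftrightarrow> P' x" for P P' b c
  proof
    assume "\<forall>u. timelike u \<and> mink u (mu *\<^sub>R f2) < 0 \<longrightarrow> P (det3 u (mu *\<^sub>R f2) (b *\<^sub>R f2 + c *\<^sub>R n))"
    then have "P (det3 ?u0 (mu *\<^sub>R f2) (b *\<^sub>R f2 + c *\<^sub>R n))" using u0 by blast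
    then have "P (\<bar>mu\<bar> * (- (c * ?d)))" unfolding detu u0(3) .
    moreover have "\<bar>mu\<bar> > 0" using mu by simp
    ultimately show "P' (- (c * ?d))" using PP by blast
  next
    assume P': "P' (- (c * ?d))"
    show "\<forall>u. timelike u \<and> mink u (mu *\<^sub>R f2) < 0 \<longrightarrow> P (det3 u (mu *\<^sub>R f2) (b *\<^sub>R f2 + c *\<^sub>R n))"
    proof (intro allI impI)
      fix u assume "timelike u \<and> mink u (mu *\<^sub>R f2) < 0"
      then have "mu * mink u f2 < 0" by (simp add: mink_lin)
      then have t: "-2 * mu * mink u f2 > 0" by simp
      show "P (det3 u (mu *\<^sub>R f2) (b *\<^sub>R f2 + c *\<^sub>R n))" unfolding detu
        using PP[OF t, of "- (c * ?d)"] P' by blast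
    qed
  qed
  have kp: "(\<forall>u. timelike u \<and> mink u (mu *\<^sub>R f2) < 0 \<longrightarrow> det3 u (mu *\<^sub>R f2) (b *\<^sub>R f2 + c *\<^sub>R n) > 0) \<longleftrightarrow> c * ?d < 0" for b c
    using key[of "\<lambda>x. x > 0" "\<lambda>x. x > 0" b c] by (simp add: zero_less_mult_iff)
  have km: "(\<forall>u. timelike u \<and> mink u (mu *\<^sub>R f2) < 0 \<longrightarrow> det3 u (mu *\<^sub>R f2) (b *\<^sub>R f2 + c *\<^sub>R n) < 0) \<longleftrightarrow> c * ?d > 0" for b c
    using key[of "\<lambda>x. x < 0" "\<lambda>x. x < 0" b c] by (simp add: mult_less_0_iff)
  show "wing_plus p (mu *\<^sub>R f2) = {p + b *\<^sub>R f2 + c *\<^sub>R n | b c. c * ?d < 0}"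
    unfolding wing_plus_def using orth kp by (auto simp: add.assoc) (metis add.assoc)+
  show "wing_minus p (mu *\<^sub>R f2) = {p + b *\<^sub>R f2 + c *\<^sub>R n | b c. c * ?d > 0}"
    unfolding wing_minus_def using orth km by (auto simp: add.assoc) (metis add.assoc)+
qed

lemma stem_eq:
  assumes mu: "mu \<noteq> 0"
  shows "stem p f1 (mu *\<^sub>R f2) = {p + a *\<^sub>R f1 + b *\<^sub>R f2 | a b. a * b \<ge> 0}"
proof (intro equalityI subsetI)
  fix x assume "x \<in> stem p f1 (mu *\<^sub>R f2)"
  then obtain w where w: "x = p + w" "w \<in> span {f1, mu *\<^sub>R f2}" "mink w w \<le> 0" unfolding stem_def by auto
  then obtain u v where uv: "w = u *\<^sub>R f1 + v *\<^sub>R (mu *\<^sub>R f2)" using span2_iff by blast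
  have "mink w w = - (u * (v * mu))" unfolding uv by (simp add: mink_lin rels algebra_simps)
  then have "u * (v * mu) \<ge> 0" using w by simp
  moreover have "x = p + u *\<^sub>R f1 + (v * mu) *\<^sub>R f2" using w uv by (simp add: add.assoc)
  ultimately show "x \<in> {p + a *\<^sub>R f1 + b *\<^sub>R f2 | a b. a * b \<ge> 0}" by blast
next
  fix x assume "x \<in> {p + a *\<^sub>R f1 + b *\<^sub>R f2 | a b. a * b \<ge> 0}"
  then obtain a b where ab: "x = p + a *\<^sub>R f1 + b *\<^sub>R f2" "a * b \<ge> 0" by auto
  let ?w = "a *\<^sub>R f1 + b *\<^sub>R f2"
  have "?w = a *\<^sub>R f1 + (b / mu) *\<^sub>R (mu *\<^sub>R f2)" using mu by simp
  then have "?w \<in> span {f1, mu *\<^sub>R f2}" using span2_iff by blast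
  moreover have "mink ?w ?w = - (a * b)" by (simp add: mink_lin rels algebra_simps)
  moreover have "x = p + ?w" using ab by (simp add: add.assoc)
  ultimately show "x \<in> stem p f1 (mu *\<^sub>R f2)" unfolding stem_def using ab by auto
qed

lemma Cset_crooked:
  assumes mu: "mu \<noteq> 0"
  shows "det3 f2 f1 n > 0 \<Longrightarrow> Cset = wing_plus p f1 \<union> stem p f1 (mu *\<^sub>R f2) \<union> wing_plus p (mu *\<^sub>R f2)"
    and "det3 f2 f1 n < 0 \<Longrightarrow> Cset = wing_minus p f1 \<union> stem p f1 (mu *\<^sub>R f2) \<union> wing_minus p (mu *\<^sub>R f2)"
proof -
  assume d: "det3 f2 f1 n > 0"
  have "{p + a *\<^sub>R f1 + c *\<^sub>R n | a c. c * det3 f2 f1 n > 0} = {p + a *\<^sub>R f1 + c *\<^sub>R n | a c. c > 0}"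
    using d by (simp add: zero_less_mult_iff)
  moreover have "{p + b *\<^sub>R f2 + c *\<^sub>R n | b c. c * det3 f2 f1 n < 0} = {p + b *\<^sub>R f2 + c *\<^sub>R n | b c. c < 0}"
    using d by (simp add: mult_less_0_iff)
  ultimately show "Cset = wing_plus p f1 \<union> stem p f1 (mu *\<^sub>R f2) \<union> wing_plus p (mu *\<^sub>R f2)"
    unfolding Cset_def wing_f1 wing_f2[OF mu] stem_eq[OF mu] by simp
next
  assume d: "det3 f2 f1 n < 0"
  have "{p + a *\<^sub>R f1 + c *\<^sub>R n | a c. c * det3 f2 f1 n < 0} = {p + a *\<^sub>R f1 + c *\<^sub>R n | a c. c > 0}"
    using d by (simp add: mult_less_0_iff)
  moreover have "{p + b *\<^sub>R f2 + c *\<^sub>R n | b c. c * det3 f2 f1 n > 0} = {p + b *\<^sub>R f2 + c *\<^sub>R n | b c. c < 0}"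
    using d by (simp add: zero_less_mult_iff)
  ultimately show "Cset = wing_minus p f1 \<union> stem p f1 (mu *\<^sub>R f2) \<union> wing_minus p (mu *\<^sub>R f2)"
    unfolding Cset_def wing_f1 wing_f2[OF mu] stem_eq[OF mu] by simp
qed

end

definition Jc :: "real^3 \<Rightarrow> real^3 \<Rightarrow> real^3" where
  "Jc a b = vector [a$2*b$3 - a$3*b$2, a$3*b$1 - a$1*b$3, -(a$1*b$2 - a$2*b$1)]"

lemma Jc_props:
  "mink (Jc a b) a = 0" "mink (Jc a b) b = 0"
  "mink (Jc a b) (Jc a b) = (mink a b)\<^sup>2 - mink a a * mink b b"
  "det3 b a (Jc a b) = - mink (Jc a b) (Jc a b)"
  unfolding Jc_def mink_def det3_expand by (simp_all add: algebra_simps power2_eq_square)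

lemma mink_uminus: "mink (- x) y = - mink x y" "mink x (- y) = - mink x y"
  unfolding mink_def by simp_all

lemma det3_uminus: "det3 u v (- w) = - det3 u v w" unfolding det3_expand by simp

lemma null_orth_parallel:
  assumes l1: "lightlike v1" and l2: "lightlike v2" and o: "mink v1 v2 = 0"
  shows "\<exists>t. v2 = t *\<^sub>R v1"
proof -
  define a where "a = v1$1" define b where "b = v1$2" define c where "c = v1$3"
  define a' where "a' = v2$1" define b' where "b' = v2$2" define c' where "c' = v2$3"
  have n1: "a\<^sup>2 + b\<^sup>2 = c\<^sup>2" using l1 unfolding lightlike_def mink_def a_def b_def c_def by (simp add: power2_eq_square)
  have n2: "a'\<^sup>2 + b'\<^sup>2 = c'\<^sup>2" using l2 unfolding lightlike_def mink_def a'_def b'_def c'_def by (simp add: power2_eq_square)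
  have oo: "a * a' + b * b' = c * c'" using o unfolding mink_def a_def b_def c_def a'_def b'_def c'_def by simp
  have c0: "c \<noteq> 0"
  proof
    assume "c = 0"
    then have "a = 0" "b = 0" using n1 by (auto simp: sum_power2_eq_zero_iff)
    then have "v1 = 0" using \<open>c = 0\<close> unfolding a_def b_def c_def by (simp add: vec3_eq_iff)
    then show False using l1 unfolding lightlike_def by simp
  qed
  have id: "(a' * c - a * c')\<^sup>2 + (b' * c - b * c')\<^sup>2 = c\<^sup>2 * (a'\<^sup>2 + b'\<^sup>2) + c'\<^sup>2 * (a\<^sup>2 + b\<^sup>2) - 2 * c * c' * (a * a' + b * b')"
    by (simp add: algebra_simps power2_eq_square)
  also have "\<dots> = 0" unfolding n1 n2 oo by (simp add: algebra_simps power2_eq_square)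
  finally have "a' * c - a * c' = 0" "b' * c - b * c' = 0" by (auto simp: sum_power2_eq_zero_iff)
  then have "a' = (c' / c) * a" "b' = (c' / c) * b" "c' = (c' / c) * c" using c0 by (auto simp: field_simps)
  then have "v2 = (c' / c) *\<^sub>R v1" unfolding a_def b_def c_def a'_def b'_def c'_def by (simp add: vec3_eq_iff)
  then show ?thesis by blast
qed

lemma geod_scale: "t \<noteq> 0 \<Longrightarrow> geod p (t *\<^sub>R v) = geod p v"
  unfolding geod_def
proof (intro equalityI subsetI)
  fix x assume t: "t \<noteq> 0"
  { assume "x \<in> {p + s *\<^sub>R t *\<^sub>R v |s. True}"
    then obtain s where "x = p + s *\<^sub>R t *\<^sub>R v" by auto
    then show "x \<in> {p + s *\<^sub>R v |s. True}" by (intro CollectI exI[of _ "s * t"]) auto }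
  { assume "x \<in> {p + s *\<^sub>R v |s. True}"
    then obtain s where "x = p + s *\<^sub>R v" by auto
    then show "x \<in> {p + s *\<^sub>R t *\<^sub>R v |s. True}" using t by (intro CollectI exI[of _ "s / t"]) auto }
qed

lemma crooked_cpl:
  assumes "crooked_plane C"
  shows "\<exists>p f1 f2 n. cpl f1 f2 n \<and> C = cpl.Cset p f1 f2 n"
proof -
  obtain p v1 v2 where l1: "lightlike v1" and l2: "lightlike v2" and g: "geod p v1 \<noteq> geod p v2"
    and C: "C = wing_plus p v1 \<union> stem p v1 v2 \<union> wing_plus p v2 \<or>
            C = wing_minus p v1 \<union> stem p v1 v2 \<union> wing_minus p v2"
    using assms unfolding crooked_plane_def by blast
  define k where "k = mink v1 v2"
  have k0: "k \<noteq> 0"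
  proof
    assume "k = 0"
    then obtain t where t: "v2 = t *\<^sub>R v1" using null_orth_parallel[OF l1 l2] unfolding k_def by blast
    have "t \<noteq> 0" using l2 t unfolding lightlike_def by auto
    then show False using g t geod_scale by simp
  qed
  define f1 where "f1 = v1"
  define f2 where "f2 = (- 1 / (2 * k)) *\<^sub>R v2"
  define mu where "mu = - 2 * k"
  have mu0: "mu \<noteq> 0" unfolding mu_def using k0 by simp
  have v2: "v2 = mu *\<^sub>R f2" unfolding f2_def mu_def using k0 by simp
  have f11: "mink f1 f1 = 0" using l1 unfolding f1_def lightlike_def by simp
  have f22: "mink f2 f2 = 0" using l2 unfolding f2_def lightlike_def by (simp add: mink_lin mink_uminus)
  have f12: "mink f1 f2 = -1/2" unfolding f1_def f2_def using k0 by (simp add: mink_lin mink_uminus k_def[symmetric])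
  define n0 where "n0 = Jc f1 f2"
  have n01: "mink n0 f1 = 0" and n02: "mink n0 f2 = 0" unfolding n0_def using Jc_props by auto
  have n00: "mink n0 n0 = 1/4" unfolding n0_def Jc_props(3) f11 f22 f12 by (simp add: power2_eq_square)
  have dn0: "det3 f2 f1 n0 = - 1/4" unfolding n0_def Jc_props(4) using n00 unfolding n0_def by simp
  have cplr: "cpl f1 f2 (r *\<^sub>R n0)" if r: "r = 2 \<or> r = -2" for r
  proof
    show "mink f1 f1 = 0" "mink f2 f2 = 0" "mink f1 f2 = -1/2" by (fact f11 f22 f12)+
    show "mink (r *\<^sub>R n0) f1 = 0" "mink (r *\<^sub>R n0) f2 = 0" using n01 n02 by (simp_all add: mink_lin)
    show "mink (r *\<^sub>R n0) (r *\<^sub>R n0) = 1" using n00 r by (auto simp: mink_lin)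
  qed
  from C show ?thesis
  proof
    assume Cp: "C = wing_plus p v1 \<union> stem p v1 v2 \<union> wing_plus p v2"
    interpret c: cpl p f1 f2 "(-2) *\<^sub>R n0" by (rule cplr) simp
    have "det3 f2 f1 ((-2) *\<^sub>R n0) > 0" using dn0 by (simp add: det3_lin det3_uminus)
    then have "c.Cset = wing_plus p f1 \<union> stem p f1 (mu *\<^sub>R f2) \<union> wing_plus p (mu *\<^sub>R f2)"
      by (rule c.Cset_crooked(1)[OF mu0])
    then have "C = c.Cset" using Cp v2 unfolding f1_def by simp
    then show ?thesis using c.cpl_axioms by blast
  next
    assume Cm: "C = wing_minus p v1 \<union> stem p v1 v2 \<union> wing_minus p v2"
    interpret c: cpl p f1 f2 "2 *\<^sub>R n0" by (rule cplr) simp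
    have "det3 f2 f1 (2 *\<^sub>R n0) < 0" using dn0 by (simp add: det3_lin det3_uminus)
    then have "c.Cset = wing_minus p f1 \<union> stem p f1 (mu *\<^sub>R f2) \<union> wing_minus p (mu *\<^sub>R f2)"
      by (rule c.Cset_crooked(2)[OF mu0])
    then have "C = c.Cset" using Cm v2 unfolding f1_def by simp
    then show ?thesis using c.cpl_axioms by blast
  qed
qed

theorem mainTheorem1:
  fixes C :: "(real^3) set"
  assumes "crooked_plane C"
  defines "Cbar \<equiv> Ein closure_of (ein_embed ` C)"
  defines "L \<equiv> {S \<in> topspace EinHat. ein_cover S \<in> Cbar}"
  shows "subtopology Ein Cbar homeomorphic_space klein_bottle \<and>
         double_covering_map (subtopology EinHat L) (subtopology Ein Cbar) ein_cover \<and>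
         subtopology EinHat L homeomorphic_space torus"
proof -
  obtain p f1 f2 n where c: "cpl f1 f2 n" and C: "C = cpl.Cset p f1 f2 n"
    using crooked_cpl[OF assms(1)] by blast
  interpret cpl p f1 f2 n by (rule c)
  have Cb: "Cbar = Cb" unfolding Cbar_def C using closure_eq by simp
  have L: "L = Lset" unfolding L_def Cb using L_eq unfolding Lset_def by simp
  show ?thesis unfolding Cb L using klein_homeo double_cover torus_homeo by blast
qed

end
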